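(* Let $a=\{a_1,\dots,a_m\}$ be a set of positive integers and $n\ge 0$. There exist a function $P_{n,a}:\mathbb{Z}_{\ge0}\to\mathbb{Q}$ (in fact a polynomial) and an integer $N$ such that for every $s\ge 1$ and all integers $k_1,\dots,k_s\ge N$, the number of $n$-element independent sets of the disjoint union $F(a,k_1)+F(a,k_2)+\cdots+F(a,k_s)$ equals $P_{n,a}(k_1+\cdots+k_s)$. In other words, this number depends only on $a$, $n$ and $\sum_ik_i$.
   Context: For a set $a=\{a_1,\dots,a_m\}$ of positive integers and a positive integer $k$, $F(a,k)$ is the simple graph with vertex set $\mathbb{Z}/k\mathbb{Z}$ in which distinct vertices $i,j$ are adjacent if and only if $i-j\equiv a_r\pmod k$ or $j-i\equiv a_r\pmod k$ for some $1\le r\le m$. $G_1+\cdots+G_s$ denotes the disjoint union of graphs. An independent set is a set of vertices no two of which are adjacent. *)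

theory Defs
  imports "HOL-Computational_Algebra.Polynomial"
begin

text \<open>The circulant graph F(a,k): vertex set Z/kZ, represented by {0..<k}.
  Distinct vertices i, j are adjacent iff i - j = r or j - i = r (mod k) for some r in a.\<close>
definition circ_adj :: "nat set \<Rightarrow> nat \<Rightarrow> nat \<Rightarrow> nat \<Rightarrow> bool" where
  "circ_adj a k i j \<longleftrightarrow> i \<noteq> j \<and>
     (\<exists>r\<in>a. (int i - int j) mod int k = int r mod int k \<or>
             (int j - int i) mod int k = int r mod int k)"

text \<open>Disjoint union F(a,k 0) + ... + F(a,k (s-1)): vertices are pairs (t,i) with t < s, i < k t.\<close>
definition union_verts :: "nat \<Rightarrow> (nat \<Rightarrow> nat) \<Rightarrow> (nat \<times> nat) set" where
  "union_verts s k = {(t, i). t < s \<and> i < k t}"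

definition union_adj :: "nat set \<Rightarrow> (nat \<Rightarrow> nat) \<Rightarrow> nat \<times> nat \<Rightarrow> nat \<times> nat \<Rightarrow> bool" where
  "union_adj a k v w \<longleftrightarrow> fst v = fst w \<and> circ_adj a (k (fst v)) (snd v) (snd w)"

definition union_indep :: "nat set \<Rightarrow> nat \<Rightarrow> (nat \<Rightarrow> nat) \<Rightarrow> (nat \<times> nat) set \<Rightarrow> bool" where
  "union_indep a s k S \<longleftrightarrow> S \<subseteq> union_verts s k \<and>
     (\<forall>v\<in>S. \<forall>w\<in>S. \<not> union_adj a k v w)"

definition num_indep :: "nat set \<Rightarrow> nat \<Rightarrow> nat \<Rightarrow> (nat \<Rightarrow> nat) \<Rightarrow> nat" where
  "num_indep a n s k = card {S. union_indep a s k S \<and> card S = n}"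

end

theory Submission
  imports Defs "HOL-Computational_Algebra.Formal_Power_Series"
begin

unbundle fps_syntax


definition afree :: "nat set \<Rightarrow> int set \<Rightarrow> bool" where
  "afree a T \<longleftrightarrow> (\<forall>u\<in>T. \<forall>r\<in>a. u + int r \<notin> T)"

definition cluster :: "int \<Rightarrow> int set \<Rightarrow> bool" where
  "cluster M C \<longleftrightarrow> finite C \<and> 0 \<in> C \<and> (\<forall>c\<in>C. 0 \<le> c) \<and>
     (\<forall>w. 0 \<le> w \<and> w < Max C \<longrightarrow> (\<exists>c\<in>C. w < c \<and> c \<le> w + M))"

definition rod :: "int \<Rightarrow> int set \<Rightarrow> int \<Rightarrow> int set \<Rightarrow> bool" where
  "rod M T y C \<longleftrightarrow> T \<inter> {y - M .. y + Max C + M} = (\<lambda>c. y + c) ` C"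

definition free :: "int \<Rightarrow> int set \<Rightarrow> int \<Rightarrow> bool" where
  "free M T x \<longleftrightarrow> T \<inter> {x - M .. x} = {}"

lemma cluster_Max_ge: "cluster M C \<Longrightarrow> c \<in> C \<Longrightarrow> c \<le> Max C"
  unfolding cluster_def by auto

lemma cluster_nonneg: "cluster M C \<Longrightarrow> c \<in> C \<Longrightarrow> 0 \<le> c"
  unfolding cluster_def by auto

lemma cluster_Max_in: "cluster M C \<Longrightarrow> Max C \<in> C"
  unfolding cluster_def by (intro Max_in) auto

lemma rod_mem: "rod M T y C \<Longrightarrow> cluster M C \<Longrightarrow> c \<in> C \<Longrightarrow> y + c \<in> T"
  unfolding rod_def by blast

lemma rod_start: "rod M T y C \<Longrightarrow> cluster M C \<Longrightarrow> u \<in> T \<Longrightarrow> y - M \<le> u \<Longrightarrow> u < y \<Longrightarrow> False"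
proof -
  assume r: "rod M T y C" and c: "cluster M C" and u: "u \<in> T" "y - M \<le> u" "u < y"
  have "0 \<le> Max C" using c cluster_Max_ge[OF c] unfolding cluster_def by auto
  hence "u \<in> T \<inter> {y - M .. y + Max C + M}" using u by auto
  hence "u \<in> (\<lambda>c. y + c) ` C" using r unfolding rod_def by simp
  then obtain c' where "c' \<in> C" "u = y + c'" by auto
  thus False using cluster_nonneg[OF c] u by force
qed

lemma rod_in_window: "rod M T y C \<Longrightarrow> u \<in> T \<Longrightarrow> y - M \<le> u \<Longrightarrow> u \<le> y + Max C + M \<Longrightarrow> u - y \<in> C"
  unfolding rod_def by (metis (no_types, lifting) IntI add_diff_cancel_left' atLeastAtMost_iff imageE)

lemma rod_free_excl:
  assumes c: "cluster M C" and r: "rod M T y C" and f: "free M T x"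
    and cov: "y \<le> x" "x \<le> y + Max C + M"
  shows False
proof (cases "x - y \<le> M")
  case True
  have "y \<in> T" using rod_mem[OF r c] c unfolding cluster_def by force
  thus False using f True cov unfolding free_def by auto
next
  case False
  define w where "w = x - y - M - 1"
  have "0 \<le> w" "w < Max C" using False cov by (auto simp: w_def)
  then obtain c' where c': "c' \<in> C" "w < c'" "c' \<le> w + M" using c unfolding cluster_def by blast
  have "y + c' \<in> T" using rod_mem[OF r c c'(1)] .
  moreover have "y + c' \<in> {x - M .. x}" using c' by (auto simp: w_def)
  ultimately show False using f unfolding free_def by auto
qed

lemma rod_unique_y_aux:
  assumes M: "0 \<le> M" and c: "cluster M C" and c': "cluster M C'" and r: "rod M T y C" and r': "rod M T y' C'"
    and cov: "y \<le> x" "x \<le> y + Max C + M" "y' \<le> x" and lt: "y < y'"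
  shows False
proof -
  have y'T: "y' \<in> T" using rod_mem[OF r' c'] c' unfolding cluster_def by force
  have yT: "y \<in> T" using rod_mem[OF r c] c unfolding cluster_def by force
  have cC: "y' - y \<in> C" using rod_in_window[OF r y'T] lt cov M by auto
  show False
  proof (cases "y' - y \<le> M")
    case True
    thus False using rod_start[OF r' c' yT] lt by auto
  next
    case False
    define w where "w = y' - y - M - 1"
    have "0 \<le> w" "w < Max C" using False cluster_Max_ge[OF c cC] M by (auto simp: w_def)
    then obtain d where d: "d \<in> C" "w < d" "d \<le> w + M" using c unfolding cluster_def by blast
    have yd: "y + d \<in> T" using rod_mem[OF r c d(1)] .
    show False using rod_start[OF r' c' yd] d by (auto simp: w_def)
  qed
qed

lemma rod_unique:
  assumes M: "0 \<le> M" and c: "cluster M C" and c': "cluster M C'" and r: "rod M T y C" and r': "rod M T y' C'"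
    and cov: "y \<le> x" "x \<le> y + Max C + M" "y' \<le> x" "x \<le> y' + Max C' + M"
  shows "y = y' \<and> C = C'"
proof -
  have yy: "y = y'"
  proof (rule ccontr)
    assume "y \<noteq> y'"
    hence "y < y' \<or> y' < y" by auto
    thus False
      using rod_unique_y_aux[OF M c c' r r' cov(1,2,3)] rod_unique_y_aux[OF M c' c r' r cov(3,4,1)] by blast
  qed
  have main: "C = C'" if c: "cluster M C" and c': "cluster M C'" and r: "rod M T y C" and r': "rod M T y C'"
      and le: "Max C \<le> Max C'" for C C'
  proof -
    have eqM: "Max C = Max C'"
    proof (rule ccontr)
      assume "Max C \<noteq> Max C'"
      hence lt: "Max C < Max C'" using le by auto
      have "0 \<le> Max C" using cluster_Max_ge[OF c] c unfolding cluster_def by auto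
      then obtain d where d: "d \<in> C'" "Max C < d" "d \<le> Max C + M" using c' lt unfolding cluster_def by blast
      have "y + d \<in> T" using rod_mem[OF r' c' d(1)] .
      have "0 \<le> d" using cluster_nonneg[OF c' d(1)] .
      hence "(y + d) - y \<in> C" using rod_in_window[OF r \<open>y + d \<in> T\<close>] d M by auto
      hence "d \<in> C" by simp
      thus False using cluster_Max_ge[OF c \<open>d \<in> C\<close>] d(2) by simp
    qed
    have "(\<lambda>c. y + c) ` C = (\<lambda>c. y + c) ` C'" using r r' eqM unfolding rod_def by simp
    moreover have "inj (\<lambda>c::int. y + c)" by (simp add: inj_def)
    ultimately show ?thesis by (simp add: inj_image_eq_iff)
  qed
  show ?thesis
  proof (cases "Max C \<le> Max C'")
    case True thus ?thesis using main[OF c c' r] r' yy by auto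
  next
    case False thus ?thesis using main[OF c' c] r' r yy by auto
  qed
qed


lemma chain_card:
  assumes M: "1 \<le> M" and v: "v \<in> T" and win: "\<forall>w. v \<le> w \<and> w < b \<longrightarrow> (\<exists>c\<in>T. w < c \<and> c \<le> w + M)"
    and fin: "finite (T \<inter> {v .. v + int j * M})" and jb: "int j * M \<le> b - v"
  shows "j + 1 \<le> card (T \<inter> {v .. v + int j * M})"
  using fin jb
proof (induction j)
  case 0
  have "T \<inter> {v .. v + int 0 * M} = {v}" using v by auto
  thus ?case by simp
next
  case (Suc j)
  have sub: "T \<inter> {v .. v + int j * M} \<subseteq> T \<inter> {v .. v + int (Suc j) * M}"
    using M by (auto simp: algebra_simps)
  have fin': "finite (T \<inter> {v .. v + int j * M})" using finite_subset[OF sub Suc.prems(1)] .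
  have "int j * M \<le> b - v" using Suc.prems(2) M by (auto simp: algebra_simps)
  hence IH: "j + 1 \<le> card (T \<inter> {v .. v + int j * M})" using Suc.IH fin' by blast
  have "v + int j * M < b" using Suc.prems(2) M by (auto simp: algebra_simps)
  moreover have "v \<le> v + int j * M" using M by simp
  ultimately obtain c where c: "c \<in> T" "v + int j * M < c" "c \<le> v + int j * M + M" using win by blast
  have "insert c (T \<inter> {v .. v + int j * M}) \<subseteq> T \<inter> {v .. v + int (Suc j) * M}"
    using sub c M by (auto simp: algebra_simps intro: order_trans[of _ "v + int j * M"])
  hence "card (insert c (T \<inter> {v .. v + int j * M})) \<le> card (T \<inter> {v .. v + int (Suc j) * M})"
    using Suc.prems(1) by (rule card_mono[rotated])
  moreover have "c \<notin> T \<inter> {v .. v + int j * M}" using c by auto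
  ultimately show ?case using IH fin' by simp
qed

lemma rod_exists:
  assumes M: "1 \<le> M" and W: "W = int (q + 2) * M"
    and fin: "finite (T \<inter> {x - W .. x + W})" and cq: "card (T \<inter> {x - W .. x + W}) \<le> q"
    and nf: "\<not> free M T x"
  shows "\<exists>y C. cluster M C \<and> rod M T y C \<and> y \<le> x \<and> x \<le> y + Max C + M \<and>
           C \<subseteq> {0 .. 2 * int q * M} \<and> (\<lambda>c. y + c) ` C \<subseteq> T \<inter> {x - W .. x + W}"
proof -
  define win where "win = T \<inter> {x - W .. x + W}"
  obtain z where z: "z \<in> T" "x - M \<le> z" "z \<le> x" using nf unfolding free_def by auto
  have Wge: "W \<ge> (int q + 2) * M" using W by (simp add: algebra_simps)
  have qM: "0 \<le> int q * M" using M by simp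
  have qM': "0 \<le> M * int q" using M by simp
  have Wge': "M * int q + 2 * M \<le> W" using Wge by (simp add: algebra_simps)
  have "x - W \<le> z" "z \<le> x + W" using z Wge' qM' M by linarith+
  hence zwin: "z \<in> win" using z unfolding win_def by auto
  have chain: "b - v < int q * M" if v: "v \<in> T" and vb: "v \<le> b"
     and wv: "\<forall>w. v \<le> w \<and> w < b \<longrightarrow> (\<exists>c\<in>T. w < c \<and> c \<le> w + M)"
     and sub: "{v .. v + int q * M} \<subseteq> {x - W .. x + W}" for v b
  proof (rule ccontr)
    assume "\<not> b - v < int q * M"
    hence "int q * M \<le> b - v" by simp
    moreover have "finite (T \<inter> {v .. v + int q * M})" using finite_subset[OF _ fin] sub by blast
    ultimately have "q + 1 \<le> card (T \<inter> {v .. v + int q * M})" using chain_card[OF M v wv] by blast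
    moreover have "card (T \<inter> {v .. v + int q * M}) \<le> card (T \<inter> {x - W .. x + W})"
      using sub fin by (intro card_mono) auto
    ultimately show False using cq by simp
  qed
  define R where "R = {v \<in> win. v \<le> z \<and> (\<forall>w. v \<le> w \<and> w < z \<longrightarrow> (\<exists>c\<in>T. w < c \<and> c \<le> w + M))}"
  define E where "E = {v \<in> win. z \<le> v \<and> (\<forall>w. z \<le> w \<and> w < v \<longrightarrow> (\<exists>c\<in>T. w < c \<and> c \<le> w + M))}"
  have Rw: "R \<subseteq> win" "E \<subseteq> win" unfolding R_def E_def by auto
  have fw: "finite win" using fin unfolding win_def .
  have "z \<in> R" "z \<in> E" using zwin unfolding R_def E_def by auto
  hence finR: "finite R" "R \<noteq> {}" and finE: "finite E" "E \<noteq> {}"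
    using finite_subset[OF Rw(1) fw] finite_subset[OF Rw(2) fw] by auto
  define y where "y = Min R"
  define e where "e = Max E"
  have yR: "y \<in> R" using Min_in[OF finR] y_def by simp
  have eE: "e \<in> E" using Max_in[OF finE] e_def by simp
  have yT: "y \<in> T" "y \<le> z" "x - W \<le> y" using yR unfolding R_def win_def by auto
  have eT: "e \<in> T" "z \<le> e" "e \<le> x + W" using eE unfolding E_def win_def by auto
  have yw: "\<forall>w. y \<le> w \<and> w < z \<longrightarrow> (\<exists>c\<in>T. w < c \<and> c \<le> w + M)" using yR unfolding R_def by auto
  have ew: "\<forall>w. z \<le> w \<and> w < e \<longrightarrow> (\<exists>c\<in>T. w < c \<and> c \<le> w + M)" using eE unfolding E_def by auto
  have qMc: "int q * M = M * int q" by simp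
  have "y + int q * M \<le> x + W" using yT z qM Wge' qM' M qMc by linarith
  hence zy: "z - y < int q * M"
    using chain[OF yT(1) yT(2) yw] yT by auto
  have "x - W \<le> z" "z + int q * M \<le> x + W" using z Wge' qM' M qMc by linarith+
  hence ez: "e - z < int q * M"
    using chain[OF z(1) eT(2) ew] by auto
  have start: False if u: "u \<in> T" "y - M \<le> u" "u < y" for u
  proof -
    have "u \<in> win" using u zy z Wge yT M qM unfolding win_def by (auto simp: algebra_simps)
    moreover have "\<forall>w. u \<le> w \<and> w < z \<longrightarrow> (\<exists>c\<in>T. w < c \<and> c \<le> w + M)"
    proof (intro allI impI)
      fix w assume w: "u \<le> w \<and> w < z"
      show "\<exists>c\<in>T. w < c \<and> c \<le> w + M"
      proof (cases "w < y")
        case True thus ?thesis using yT(1) w u by (intro bexI[of _ y]) auto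
      next
        case False thus ?thesis using yw w by auto
      qed
    qed
    ultimately have "u \<in> R" using u yT unfolding R_def by auto
    hence "y \<le> u" unfolding y_def using Min_le[OF finR(1)] by blast
    thus False using u by simp
  qed
  have endp: False if c: "c \<in> T" "e < c" "c \<le> e + M" for c
  proof -
    have "c \<in> win" using c ez z Wge eT M qM unfolding win_def by (auto simp: algebra_simps)
    moreover have "\<forall>w. z \<le> w \<and> w < c \<longrightarrow> (\<exists>c'\<in>T. w < c' \<and> c' \<le> w + M)"
    proof (intro allI impI)
      fix w assume w: "z \<le> w \<and> w < c"
      show "\<exists>c'\<in>T. w < c' \<and> c' \<le> w + M"
      proof (cases "w < e")
        case True thus ?thesis using ew w by auto
      next
        case False thus ?thesis using c w by (intro bexI[of _ c]) auto
      qed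
    qed
    ultimately have "c \<in> E" using c eT unfolding E_def by auto
    hence "c \<le> e" unfolding e_def using Max_ge[OF finE(1)] by blast
    thus False using c by simp
  qed
  define C where "C = (\<lambda>u. u - y) ` (T \<inter> {y .. e})"
  have finC: "finite C" using fin yT eT unfolding C_def
    by (intro finite_imageI finite_subset[OF _ fin]) auto
  have ye: "y \<le> e" using yT eT by simp
  have MaxC: "Max C = e - y"
  proof (rule Max_eqI[OF finC])
    show "c \<le> e - y" if "c \<in> C" for c using that unfolding C_def by auto
    show "e - y \<in> C" unfolding C_def using eT ye by auto
  qed
  have clC: "cluster M C"
    unfolding cluster_def
  proof (intro conjI allI impI ballI)
    show "finite C" by (rule finC)
    show "0 \<in> C" unfolding C_def using yT ye by force
    show "0 \<le> c" if "c \<in> C" for c using that unfolding C_def by auto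
    fix w assume w: "0 \<le> w \<and> w < Max C"
    have "\<exists>c\<in>T. y + w < c \<and> c \<le> y + w + M"
    proof (cases "y + w < z")
      case True thus ?thesis using yw w by auto
    next
      case False thus ?thesis using ew w MaxC by auto
    qed
    then obtain c where c: "c \<in> T" "y + w < c" "c \<le> y + w + M" by blast
    have "c \<le> e"
    proof (rule ccontr)
      assume "\<not> c \<le> e"
      thus False using endp[OF c(1)] c w MaxC by auto
    qed
    hence "c - y \<in> C" unfolding C_def using c w by auto
    thus "\<exists>c\<in>C. w < c \<and> c \<le> w + M" using c by (intro bexI[of _ "c - y"]) auto
  qed
  have img: "(\<lambda>c. y + c) ` C = T \<inter> {y .. e}" unfolding C_def by (auto simp: image_image)
  have rodC: "rod M T y C"
    unfolding rod_def img MaxC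
  proof (intro equalityI subsetI)
    fix u assume u: "u \<in> T \<inter> {y - M .. y + (e - y) + M}"
    have "\<not> u < y" using start u by force
    moreover have "\<not> e < u" using endp u by force
    ultimately show "u \<in> T \<inter> {y .. e}" using u by auto
  next
    fix u assume "u \<in> T \<inter> {y .. e}"
    thus "u \<in> T \<inter> {y - M .. y + (e - y) + M}" using M by auto
  qed
  show ?thesis
  proof (intro exI conjI)
    show "cluster M C" by (rule clC)
    show "rod M T y C" by (rule rodC)
    show "y \<le> x" using yT z by simp
    show "x \<le> y + Max C + M" using MaxC z eT by simp
    show "C \<subseteq> {0 .. 2 * int q * M}" unfolding C_def using zy ez by auto
    show "(\<lambda>c. y + c) ` C \<subseteq> T \<inter> {x - W .. x + W}" unfolding img using yT eT by auto
  qed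
qed


lemma afree_subset: "afree a T \<Longrightarrow> U \<subseteq> T \<Longrightarrow> afree a U"
  unfolding afree_def by blast

lemma afree_translate: "afree a ((\<lambda>c. y + c) ` C) \<longleftrightarrow> afree a C"
  unfolding afree_def by (auto simp: add.assoc)

lemma afree_union_sep:
  assumes "afree a A" "afree a B" "\<forall>u\<in>A. \<forall>v\<in>B. u + M < v" "\<forall>r\<in>a. int r \<le> M"
  shows "afree a (A \<union> B)"
  unfolding afree_def
proof (intro ballI)
  fix u r assume u: "u \<in> A \<union> B" and r: "r \<in> a"
  show "u + int r \<notin> A \<union> B"
  proof
    assume ur: "u + int r \<in> A \<union> B"
    show False
    proof (cases "u \<in> A")
      case True
      show False
      proof (cases "u + int r \<in> A")
        case True thus False using assms(1) r \<open>u \<in> A\<close> unfolding afree_def by blast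
      next
        case False hence "u + int r \<in> B" using ur by auto
        thus False using assms(3,4) r True by fastforce
      qed
    next
      case False hence uB: "u \<in> B" using u by auto
      show False
      proof (cases "u + int r \<in> B")
        case True thus False using assms(2) r uB unfolding afree_def by blast
      next
        case False hence "u + int r \<in> A" using ur by auto
        thus False using assms(3,4) r uB by fastforce
      qed
    qed
  qed
qed

definition Paths :: "nat set \<Rightarrow> nat \<Rightarrow> nat \<Rightarrow> int set set" where
  "Paths a L m = {S. S \<subseteq> {0..<int L} \<and> afree a S \<and> card S = m}"

definition pc :: "nat set \<Rightarrow> nat \<Rightarrow> nat \<Rightarrow> nat" where
  "pc a L m = card (Paths a L m)"

lemma finite_Paths: "finite (Paths a L m)"
proof -
  have "Paths a L m \<subseteq> Pow {0..<int L}" unfolding Paths_def by auto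
  thus ?thesis by (rule finite_subset) auto
qed

definition Clus :: "nat set \<Rightarrow> int \<Rightarrow> int \<Rightarrow> int set set" where
  "Clus a M B = {C. cluster M C \<and> afree a C \<and> C \<subseteq> {0..B}}"

lemma finite_Clus: "finite (Clus a M B)"
proof -
  have "Clus a M B \<subseteq> Pow {0..B}" unfolding Clus_def by auto
  thus ?thesis by (rule finite_subset) auto
qed

lemma card_translate: "card ((\<lambda>c::int. y + c) ` C) = card C"
  by (rule card_image) (simp add: inj_on_def)

lemma ivl_nat[simp]: "{0..<int (nat z)} = {0..<z}"
  by (cases "z \<le> 0") auto

lemma Paths_Suc_split:
  "Paths a (Suc L) m = Paths a L m \<union> {S \<in> Paths a (Suc L) m. int L \<in> S}"
proof -
  have "S \<subseteq> {0..<int L}" if "S \<subseteq> {0..<int (Suc L)}" "int L \<notin> S" for S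
  proof
    fix x assume "x \<in> S"
    hence "0 \<le> x" "x < int L + 1" "x \<noteq> int L" using that by auto
    thus "x \<in> {0..<int L}" by auto
  qed
  thus ?thesis unfolding Paths_def by auto
qed

lemma pc_Suc_split:
  "pc a (Suc L) m = pc a L m + card {S \<in> Paths a (Suc L) m. int L \<in> S}"
proof -
  have d: "Paths a L m \<inter> {S \<in> Paths a (Suc L) m. int L \<in> S} = {}" unfolding Paths_def by auto
  show ?thesis unfolding pc_def
    by (subst Paths_Suc_split, rule card_Un_disjoint)
       (use d finite_Paths[of a "Suc L" m] finite_Paths[of a L m] in auto)
qed

context
  fixes a :: "nat set" and M :: int and n :: nat
  assumes M1: "1 \<le> M" and bnd: "\<forall>r\<in>a. int r \<le> M"
begin

definition fC :: "int set \<Rightarrow> nat \<Rightarrow> int set \<Rightarrow> int set" where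
  "fC C L S' = S' \<union> (\<lambda>c. (int L - Max C) + c) ` C"

lemma fC_good:
  assumes C: "C \<in> Clus a M (2 * int n * M)" "card C \<le> m" "Max C \<le> int L"
    and S': "S' \<in> Paths a (nat (int L - Max C - M)) (m - card C)"
  shows "fC C L S' \<in> Paths a (Suc L) m \<and> int L \<in> fC C L S' \<and> rod M (fC C L S') (int L - Max C) C"
proof -
  define y where "y = int L - Max C"
  have cl: "cluster M C" and afC: "afree a C" using C unfolding Clus_def by auto
  have "S' \<subseteq> {0..<int (nat (y - M))}" using S' unfolding Paths_def y_def by auto
  hence S'sub: "S' \<subseteq> {0..<y - M}" by (simp only: ivl_nat)
  have afS': "afree a S'" and cS': "card S' = m - card C" using S' unfolding Paths_def by auto
  have y0: "0 \<le> y" using C(3) y_def by simp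
  have Cy: "\<forall>c\<in>C. 0 \<le> c \<and> c \<le> Max C" using cl cluster_nonneg cluster_Max_ge by blast
  have sep: "\<forall>u\<in>S'. \<forall>v\<in>(\<lambda>c. y + c) ` C. u + M < v" using S'sub Cy by fastforce
  have af: "afree a (fC C L S')" unfolding fC_def y_def[symmetric]
    by (rule afree_union_sep[OF afS' _ sep bnd]) (simp add: afree_translate afC)
  have disj: "S' \<inter> (\<lambda>c. y + c) ` C = {}" using sep M1 by fastforce
  have finS': "finite S'" using S'sub finite_subset by blast
  have finC: "finite C" using cl unfolding cluster_def by auto
  have card: "card (fC C L S') = m" unfolding fC_def y_def[symmetric]
    using card_Un_disjoint[OF finS' finite_imageI[OF finC] disj] cS' card_translate[of y C] C(2) by simp
  have sub: "fC C L S' \<subseteq> {0..<int (Suc L)}" unfolding fC_def y_def[symmetric]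
  proof (intro subsetI)
    fix u assume "u \<in> S' \<union> (\<lambda>c. y + c) ` C"
    then consider "u \<in> S'" | c where "c \<in> C" "u = y + c" by auto
    thus "u \<in> {0..<int (Suc L)}"
    proof cases
      case 1
      have MC0: "0 \<le> Max C" using Cy cl unfolding cluster_def by auto
      have "u < int L - Max C - M" using 1 S'sub y_def by auto
      thus ?thesis using 1 S'sub M1 MC0 by auto
    next
      case 2 thus ?thesis using Cy y0 y_def by auto
    qed
  qed
  have LS: "int L \<in> fC C L S'" unfolding fC_def y_def[symmetric] using cluster_Max_in[OF cl] y_def by force
  have rod: "rod M (fC C L S') y C" unfolding rod_def fC_def y_def[symmetric]
  proof (intro equalityI subsetI)
    fix u assume "u \<in> (S' \<union> (\<lambda>c. y + c) ` C) \<inter> {y - M..y + Max C + M}"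
    thus "u \<in> (\<lambda>c. y + c) ` C" using S'sub by auto
  next
    fix u assume "u \<in> (\<lambda>c. y + c) ` C"
    thus "u \<in> (S' \<union> (\<lambda>c. y + c) ` C) \<inter> {y - M..y + Max C + M}" using Cy M1 by auto
  qed
  show ?thesis using af card sub LS rod unfolding Paths_def y_def by auto
qed

lemma fC_inj: assumes "\<forall>c\<in>C. 0 \<le> c" shows "inj_on (fC C L) (Paths a (nat (int L - Max C - M)) k)"
proof (rule inj_onI)
  fix S1 S2 assume S: "S1 \<in> Paths a (nat (int L - Max C - M)) k" "S2 \<in> Paths a (nat (int L - Max C - M)) k"
    and eq: "fC C L S1 = fC C L S2"
  have "S1 \<subseteq> {0..<int (nat (int L - Max C - M))}" "S2 \<subseteq> {0..<int (nat (int L - Max C - M))}"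
    using S unfolding Paths_def by auto
  hence s: "S1 \<subseteq> {0..<int L - Max C - M}" "S2 \<subseteq> {0..<int L - Max C - M}" by (simp_all only: ivl_nat)
  have "S1 = fC C L S1 \<inter> {..< int L - Max C - M}" "S2 = fC C L S2 \<inter> {..< int L - Max C - M}"
    using s assms M1 unfolding fC_def by auto
  thus "S1 = S2" using eq by simp
qed

lemma fC_cover:
  assumes mn: "m \<le> n" and S: "S \<in> Paths a (Suc L) m" and LS: "int L \<in> S"
  shows "\<exists>C. C \<in> Clus a M (2 * int n * M) \<and> card C \<le> m \<and> Max C \<le> int L \<and>
           (\<exists>S'\<in>Paths a (nat (int L - Max C - M)) (m - card C). S = fC C L S')"
proof -
  define W where "W = int (m + 2) * M"
  have Ssub: "S \<subseteq> {0..<int (Suc L)}" and afS: "afree a S" and cS: "card S = m"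
    using S unfolding Paths_def by auto
  have finS: "finite S" using Ssub finite_subset by blast
  have fin: "finite (S \<inter> {int L - W .. int L + W})" using finS by auto
  have cq: "card (S \<inter> {int L - W .. int L + W}) \<le> m" using cS card_mono[OF finS] by auto
  have nf: "\<not> free M S (int L)" using LS M1 unfolding free_def by auto
  obtain y C where cl: "cluster M C" and rod: "rod M S y C" and cov: "y \<le> int L" "int L \<le> y + Max C + M"
    and Cb: "C \<subseteq> {0 .. 2 * int m * M}" and img: "(\<lambda>c. y + c) ` C \<subseteq> S \<inter> {int L - W .. int L + W}"
    using rod_exists[OF M1 W_def fin cq nf] by blast
  have MaxCin: "Max C \<in> C" using cluster_Max_in[OF cl] .
  have "y + Max C \<in> S" using rod_mem[OF rod cl MaxCin] .
  hence le1: "y + Max C \<le> int L" using Ssub by auto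
  have "int L - y \<in> C" using rod_in_window[OF rod LS] cov M1 by auto
  hence le2: "int L - y \<le> Max C" using cluster_Max_ge[OF cl] by blast
  have yeq: "y = int L - Max C" using le1 le2 by simp
  have y0: "0 \<le> y" using rod_mem[OF rod cl, of 0] cl Ssub unfolding cluster_def by force
  have afC: "afree a C" using afree_subset[OF afS] img afree_translate[of a y C] by auto
  have Cb2: "C \<subseteq> {0 .. 2 * int n * M}"
  proof -
    have "2 * int m * M \<le> 2 * int n * M" using mn M1 by (intro mult_right_mono) auto
    thus ?thesis using Cb by auto
  qed
  have CClus: "C \<in> Clus a M (2 * int n * M)" using cl afC Cb2 unfolding Clus_def by auto
  have finC: "finite C" using cl unfolding cluster_def by auto
  have imgS: "(\<lambda>c. y + c) ` C \<subseteq> S" using img by auto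
  have cC: "card C \<le> m" using card_mono[OF finS imgS] card_translate[of y C] cS by simp
  define S' where "S' = S - (\<lambda>c. y + c) ` C"
  have S'sub: "S' \<subseteq> {0..<y - M}"
  proof
    fix u assume u: "u \<in> S'"
    hence uS: "u \<in> S" "u \<notin> (\<lambda>c. y + c) ` C" unfolding S'_def by auto
    have "u \<le> int L" "0 \<le> u" using uS Ssub by auto
    show "u \<in> {0..<y - M}"
    proof (rule ccontr)
      assume "u \<notin> {0..<y - M}"
      hence "y - M \<le> u" using \<open>0 \<le> u\<close> by auto
      hence "u \<in> S \<inter> {y - M .. y + Max C + M}" using uS \<open>u \<le> int L\<close> yeq M1 by auto
      thus False using rod uS unfolding rod_def by auto
    qed
  qed
  have S'P: "S' \<in> Paths a (nat (int L - Max C - M)) (m - card C)"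
  proof -
    have "S' \<subseteq> {0..<int (nat (int L - Max C - M))}" using S'sub yeq by (simp only: ivl_nat)
    moreover have "afree a S'" using afree_subset[OF afS] unfolding S'_def by auto
    moreover have "card S' = m - card C" unfolding S'_def
      using card_Diff_subset[OF finite_imageI[OF finC] imgS] card_translate[of y C] cS by simp
    ultimately show ?thesis unfolding Paths_def by auto
  qed
  have "S = fC C L S'" unfolding fC_def S'_def using imgS yeq by auto
  thus ?thesis using CClus cC le1 y0 yeq S'P by (intro exI[of _ C]) auto
qed

lemma pc_rec:
  assumes mn: "m \<le> n"
  shows "pc a (Suc L) m = pc a L m +
    (\<Sum>C\<in>Clus a M (2 * int n * M). if card C \<le> m \<and> Max C \<le> int L
        then pc a (nat (int L - Max C - M)) (m - card C) else 0)"
proof -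
  define CL where "CL = {C \<in> Clus a M (2 * int n * M). card C \<le> m \<and> Max C \<le> int L}"
  have finCL: "finite CL" using finite_Clus unfolding CL_def by auto
  have eq: "{S \<in> Paths a (Suc L) m. int L \<in> S} = (\<Union>C\<in>CL. fC C L ` Paths a (nat (int L - Max C - M)) (m - card C))"
  proof (intro equalityI subsetI)
    fix S assume "S \<in> {S \<in> Paths a (Suc L) m. int L \<in> S}"
    thus "S \<in> (\<Union>C\<in>CL. fC C L ` Paths a (nat (int L - Max C - M)) (m - card C))"
      using fC_cover[OF mn] unfolding CL_def by blast
  next
    fix S assume "S \<in> (\<Union>C\<in>CL. fC C L ` Paths a (nat (int L - Max C - M)) (m - card C))"
    thus "S \<in> {S \<in> Paths a (Suc L) m. int L \<in> S}" using fC_good unfolding CL_def by blast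
  qed
  have disj: "fC C L ` Paths a (nat (int L - Max C - M)) (m - card C) \<inter>
              fC D L ` Paths a (nat (int L - Max D - M)) (m - card D) = {}"
    if "C \<in> CL" "D \<in> CL" "C \<noteq> D" for C D
  proof (rule ccontr)
    assume "\<not> ?thesis"
    then obtain S1 S2 where S1: "S1 \<in> Paths a (nat (int L - Max C - M)) (m - card C)"
      and S2: "S2 \<in> Paths a (nat (int L - Max D - M)) (m - card D)" and e: "fC C L S1 = fC D L S2" by blast
    have r1: "rod M (fC C L S1) (int L - Max C) C" using fC_good[OF _ _ _ S1] that unfolding CL_def by auto
    have r2: "rod M (fC C L S1) (int L - Max D) D" using fC_good[OF _ _ _ S2] that e unfolding CL_def by auto
    have cC: "cluster M C" "cluster M D" using that unfolding CL_def Clus_def by auto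
    have "0 \<le> Max C" "0 \<le> Max D" using cC cluster_Max_ge unfolding cluster_def by auto
    hence "int L - Max C = int L - Max D \<and> C = D"
      using rod_unique[OF _ cC r1 r2, of "int L"] M1 by auto
    thus False using that by simp
  qed
  have "card {S \<in> Paths a (Suc L) m. int L \<in> S} =
        (\<Sum>C\<in>CL. card (fC C L ` Paths a (nat (int L - Max C - M)) (m - card C)))"
    unfolding eq by (rule card_UN_disjoint[OF finCL]) (simp_all add: finite_imageI finite_Paths disj)
  also have "\<dots> = (\<Sum>C\<in>CL. pc a (nat (int L - Max C - M)) (m - card C))"
  proof (rule sum.cong[OF refl])
    fix C assume "C \<in> CL"
    hence "\<forall>c\<in>C. 0 \<le> c" unfolding CL_def Clus_def cluster_def by auto
    thus "card (fC C L ` Paths a (nat (int L - Max C - M)) (m - card C)) = pc a (nat (int L - Max C - M)) (m - card C)"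
      unfolding pc_def by (intro card_image fC_inj)
  qed
  also have "\<dots> = (\<Sum>C\<in>Clus a M (2 * int n * M). if card C \<le> m \<and> Max C \<le> int L
        then pc a (nat (int L - Max C - M)) (m - card C) else 0)"
    unfolding CL_def by (simp add: sum.inter_filter[OF finite_Clus])
  finally show ?thesis using pc_Suc_split by simp
qed

end


definition per :: "nat \<Rightarrow> int set \<Rightarrow> int set" where
  "per k S = {z. z mod int k \<in> S}"

definition Cyc :: "nat set \<Rightarrow> nat \<Rightarrow> nat \<Rightarrow> int set set" where
  "Cyc a k m = {S. S \<subseteq> {0..<int k} \<and> afree a (per k S) \<and> card S = m}"

definition cyc :: "nat set \<Rightarrow> nat \<Rightarrow> nat \<Rightarrow> nat" where
  "cyc a k m = card (Cyc a k m)"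

definition rot :: "nat \<Rightarrow> int \<Rightarrow> int set \<Rightarrow> int set" where
  "rot k d0 S = (\<lambda>x. (x + d0) mod int k) ` S"

lemma finite_Cyc: "finite (Cyc a k m)"
proof -
  have "Cyc a k m \<subseteq> Pow {0..<int k}" unfolding Cyc_def by auto
  thus ?thesis by (rule finite_subset) auto
qed

lemma per_mem: "z \<in> per k S \<longleftrightarrow> z mod int k \<in> S"
  unfolding per_def by simp

lemma per_small: "S \<subseteq> {0..<int k} \<Longrightarrow> z \<in> {0..<int k} \<Longrightarrow> z \<in> per k S \<longleftrightarrow> z \<in> S"
  unfolding per_def by auto

lemma rot_sub: "0 < k \<Longrightarrow> rot k d0 S \<subseteq> {0..<int k}"
  unfolding rot_def by auto

lemma per_rot:
  assumes k: "0 < k" and S: "S \<subseteq> {0..<int k}"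
  shows "per k (rot k d0 S) = (\<lambda>z. z + d0) ` per k S"
proof (intro equalityI subsetI)
  fix z assume "z \<in> per k (rot k d0 S)"
  then obtain x where x: "x \<in> S" "z mod int k = (x + d0) mod int k" unfolding per_def rot_def by auto
  have "(z - d0) mod int k = (x + d0 - d0) mod int k" using mod_diff_cong[OF x(2), of d0 d0] by simp
  hence "(z - d0) mod int k = x mod int k" by simp
  also have "\<dots> = x" using x(1) S by auto
  finally have "z - d0 \<in> per k S" using x(1) unfolding per_def by simp
  thus "z \<in> (\<lambda>z. z + d0) ` per k S" by (intro image_eqI[of _ _ "z - d0"]) auto
next
  fix z assume "z \<in> (\<lambda>z. z + d0) ` per k S"
  then obtain w where w: "w \<in> per k S" "z = w + d0" by auto
  have "z mod int k = (w mod int k + d0) mod int k" using w(2) by (simp add: mod_add_left_eq)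
  thus "z \<in> per k (rot k d0 S)" using w(1) unfolding per_def rot_def by auto
qed

lemma rot_inj: "0 < k \<Longrightarrow> inj_on (\<lambda>x. (x + d0) mod int k) {0..<int k}"
proof (rule inj_onI)
  fix x y assume k: "0 < k" and xy: "x \<in> {0..<int k}" "y \<in> {0..<int k}" "(x + d0) mod int k = (y + d0) mod int k"
  have "(x + d0 - d0) mod int k = (y + d0 - d0) mod int k" using mod_diff_cong[OF xy(3), of d0 d0] by simp
  hence "x mod int k = y mod int k" by simp
  thus "x = y" using xy by simp
qed

lemma card_rot: "0 < k \<Longrightarrow> S \<subseteq> {0..<int k} \<Longrightarrow> card (rot k d0 S) = card S"
  unfolding rot_def by (rule card_image) (use rot_inj inj_on_subset in blast)

lemma rot_rot: "0 < k \<Longrightarrow> S \<subseteq> {0..<int k} \<Longrightarrow> rot k (- d0) (rot k d0 S) = S"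
proof -
  assume k: "0 < k" and S: "S \<subseteq> {0..<int k}"
  have "rot k (- d0) (rot k d0 S) = (\<lambda>x. ((x + d0) mod int k + - d0) mod int k) ` S"
    unfolding rot_def image_image by simp
  also have "\<dots> = (\<lambda>x. x) ` S"
  proof (rule image_cong[OF refl])
    fix x assume "x \<in> S"
    have "((x + d0) mod int k + - d0) mod int k = (x + d0 + - d0) mod int k" by (rule mod_add_left_eq)
    also have "\<dots> = x" using \<open>x \<in> S\<close> S by auto
    finally show "((x + d0) mod int k + - d0) mod int k = x" .
  qed
  finally show ?thesis by simp
qed

lemma card_rotate_pred:
  assumes k: "0 < k"
  shows "card {S. S \<subseteq> {0..<int k} \<and> card S = m \<and> Q (per k S)} =
         card {S. S \<subseteq> {0..<int k} \<and> card S = m \<and> Q ((\<lambda>z. z + d0) ` per k S)}"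
proof -
  have "bij_betw (rot k d0) {S. S \<subseteq> {0..<int k} \<and> card S = m \<and> Q ((\<lambda>z. z + d0) ` per k S)}
          {S. S \<subseteq> {0..<int k} \<and> card S = m \<and> Q (per k S)}"
  proof (rule bij_betw_byWitness[where f' = "rot k (- d0)"])
    show "\<forall>S\<in>{S. S \<subseteq> {0..<int k} \<and> card S = m \<and> Q ((\<lambda>z. z + d0) ` per k S)}. rot k (- d0) (rot k d0 S) = S"
      using rot_rot[OF k] by auto
    show "\<forall>S\<in>{S. S \<subseteq> {0..<int k} \<and> card S = m \<and> Q (per k S)}. rot k d0 (rot k (- d0) S) = S"
      using rot_rot[OF k, of _ "- d0"] by auto
    show "rot k d0 ` {S. S \<subseteq> {0..<int k} \<and> card S = m \<and> Q ((\<lambda>z. z + d0) ` per k S)}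
          \<subseteq> {S. S \<subseteq> {0..<int k} \<and> card S = m \<and> Q (per k S)}"
      using rot_sub[OF k] card_rot[OF k] per_rot[OF k] by auto
    show "rot k (- d0) ` {S. S \<subseteq> {0..<int k} \<and> card S = m \<and> Q (per k S)}
          \<subseteq> {S. S \<subseteq> {0..<int k} \<and> card S = m \<and> Q ((\<lambda>z. z + d0) ` per k S)}"
    proof (intro image_subsetI, clarify, intro conjI)
      fix S assume S: "S \<subseteq> {0..<int k}" "Q (per k S)" and m: "m = card S"
      show "rot k (- d0) S \<subseteq> {0..<int k}" using rot_sub[OF k] .
      show "card (rot k (- d0) S) = card S" using card_rot[OF k S(1)] .
      have "(\<lambda>z. z + d0) ` per k (rot k (- d0) S) = (\<lambda>z. z + d0) ` (\<lambda>z. z + - d0) ` per k S"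
        using per_rot[OF k S(1)] by simp
      also have "\<dots> = per k S" by (simp add: image_image)
      finally show "Q ((\<lambda>z. z + d0) ` per k (rot k (- d0) S))" using S(2) by simp
    qed
  qed
  thus ?thesis by (rule bij_betw_same_card[symmetric])
qed

lemma afree_translate2: "afree a ((\<lambda>z. z + d0) ` T) \<longleftrightarrow> afree a T"
  using afree_translate[of a d0 T] by (simp add: add.commute)

lemma rod_translate: "rod M ((\<lambda>z. z + d0) ` T) (y + d0) C \<longleftrightarrow> rod M T y C"
proof -
  have inj: "inj (\<lambda>z::int. z + d0)" by (simp add: inj_def)
  have i1: "(\<lambda>z. z + d0) ` T \<inter> {y + d0 - M..y + d0 + Max C + M} = (\<lambda>z. z + d0) ` (T \<inter> {y - M .. y + Max C + M})"
  proof (intro equalityI subsetI)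
    fix u assume "u \<in> (\<lambda>z. z + d0) ` T \<inter> {y + d0 - M..y + d0 + Max C + M}"
    then obtain t where "t \<in> T" "u = t + d0" "y + d0 - M \<le> u" "u \<le> y + d0 + Max C + M" by auto
    thus "u \<in> (\<lambda>z. z + d0) ` (T \<inter> {y - M .. y + Max C + M})" by auto
  next
    fix u assume "u \<in> (\<lambda>z. z + d0) ` (T \<inter> {y - M .. y + Max C + M})"
    then obtain t where "t \<in> T" "u = t + d0" "y - M \<le> t" "t \<le> y + Max C + M" by auto
    thus "u \<in> (\<lambda>z. z + d0) ` T \<inter> {y + d0 - M..y + d0 + Max C + M}" by auto
  qed
  have i2: "(\<lambda>c. y + d0 + c) ` C = (\<lambda>z. z + d0) ` (\<lambda>c. y + c) ` C" by (auto simp: image_image algebra_simps)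
  show ?thesis unfolding rod_def i1 i2 by (simp add: inj_image_eq_iff[OF inj])
qed


lemma mod_eq_small:
  assumes "z1 mod (k::int) = z2 mod k" "\<bar>z1 - z2\<bar> < k" shows "z1 = z2"
proof -
  have "k dvd (z1 - z2)" using assms(1) by (simp add: mod_eq_dvd_iff)
  show ?thesis
  proof (rule ccontr)
    assume "z1 \<noteq> z2"
    hence "\<bar>k\<bar> \<le> \<bar>z1 - z2\<bar>" using dvd_imp_le_int \<open>k dvd (z1 - z2)\<close> by auto
    thus False using assms(2) by auto
  qed
qed

lemma per_window:
  assumes S: "S \<subseteq> {0..<int k}" and kW: "2 * W + 1 \<le> int k"
  shows "finite (per k S \<inter> {x - W .. x + W}) \<and> card (per k S \<inter> {x - W .. x + W}) \<le> card S"
proof -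
  have fin: "finite (per k S \<inter> {x - W .. x + W})" by auto
  have inj: "inj_on (\<lambda>z. z mod int k) (per k S \<inter> {x - W .. x + W})"
    by (rule inj_onI) (rule mod_eq_small, auto simp: kW, insert kW, auto)
  have "(\<lambda>z. z mod int k) ` (per k S \<inter> {x - W .. x + W}) \<subseteq> S" unfolding per_def by auto
  moreover have "finite S" using S finite_subset by blast
  ultimately show ?thesis using card_inj_on_le[OF inj] fin by auto
qed

context
  fixes a :: "nat set" and M :: int
  assumes M1: "1 \<le> M" and bnd: "\<forall>r\<in>a. int r \<le> M"
begin

lemma afree_per_small:
  assumes S: "S \<subseteq> {0..<int k - M}"
  shows "afree a (per k S) \<longleftrightarrow> afree a S"
proof
  have "S \<subseteq> per k S"
  proof
    fix x assume "x \<in> S"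
    hence "0 \<le> x" "x < int k" using S M1 by auto
    thus "x \<in> per k S" unfolding per_def using \<open>x \<in> S\<close> by simp
  qed
  thus "afree a (per k S) \<Longrightarrow> afree a S" using afree_subset by blast
next
  assume af: "afree a S"
  show "afree a (per k S)" unfolding afree_def
  proof (intro ballI)
    fix u r assume u: "u \<in> per k S" and r: "r \<in> a"
    define i where "i = u mod int k"
    have iS: "i \<in> S" using u unfolding per_def i_def by simp
    have "int r \<le> M" using bnd r by auto
    moreover have "0 \<le> i" "i < int k - M" using iS S by auto
    ultimately have ir: "0 \<le> i + int r" "i + int r < int k" by auto
    have "(u + int r) mod int k = (i + int r) mod int k" unfolding i_def by (simp add: mod_add_left_eq)
    also have "\<dots> = i + int r" using ir by simp
    finally show "u + int r \<notin> per k S" using af iS r unfolding afree_def per_def by auto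
  qed
qed

lemma mod_neg_small: "- k \<le> z \<Longrightarrow> z < 0 \<Longrightarrow> z mod (k::int) = z + k"
proof -
  assume "- k \<le> z" "z < 0"
  thus ?thesis using mod_pos_pos_trivial[of "z+k" k] mod_add_self2[of z k] by simp
qed

lemma free_per_iff:
  assumes S: "S \<subseteq> {0..<int k}" and k: "M < int k"
  shows "free M (per k S) 0 \<longleftrightarrow> S \<subseteq> {1..<int k - M}"
proof
  assume f: "free M (per k S) 0"
  show "S \<subseteq> {1..<int k - M}"
  proof
    fix x assume x: "x \<in> S"
    have x0: "0 \<le> x" "x < int k" using x S by auto
    have "x \<noteq> 0"
    proof
      assume "x = 0"
      hence "0 \<in> per k S \<inter> {0 - M .. 0}" using x M1 unfolding per_def by simp
      thus False using f unfolding free_def by blast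
    qed
    moreover have "x < int k - M"
    proof (rule ccontr)
      assume "\<not> x < int k - M"
      hence "(x - int k) mod int k = x - int k + int k" using x0 by (intro mod_neg_small) auto
      hence "x - int k \<in> per k S" using x unfolding per_def by simp
      moreover have "x - int k \<in> {0 - M .. 0}" using x0 \<open>\<not> x < int k - M\<close> by auto
      ultimately show False using f unfolding free_def by blast
    qed
    ultimately show "x \<in> {1..<int k - M}" using x0 by auto
  qed
next
  assume S1: "S \<subseteq> {1..<int k - M}"
  show "free M (per k S) 0" unfolding free_def
  proof (rule ccontr)
    assume "per k S \<inter> {0 - M..0} \<noteq> {}"
    then obtain z where z: "z mod int k \<in> S" "- M \<le> z" "z \<le> 0" unfolding per_def by auto
    show False
    proof (cases "z = 0")
      case True thus False using z S1 by auto
    next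
      case False
      hence "z mod int k = z + int k" using z k by (intro mod_neg_small) auto
      thus False using z S1 by auto
    qed
  qed
qed

lemma image_set_inj: "inj_on (\<lambda>R. (\<lambda>z::int. z + c) ` R) X"
  by (rule inj_onI) (simp add: inj_image_eq_iff inj_def)

lemma Cyc_free_card:
  assumes k: "M + 1 \<le> int k"
  shows "card {S \<in> Cyc a k m. free M (per k S) 0} = pc a (nat (int k - M - 1)) m"
proof -
  have eqset: "{S \<in> Cyc a k m. free M (per k S) 0} = (\<lambda>R. (\<lambda>z. z + 1) ` R) ` Paths a (nat (int k - M - 1)) m"
  proof (intro equalityI subsetI)
    fix S assume "S \<in> {S \<in> Cyc a k m. free M (per k S) 0}"
    hence S: "S \<subseteq> {0..<int k}" "afree a (per k S)" "card S = m" "free M (per k S) 0"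
      unfolding Cyc_def by auto
    have S1: "S \<subseteq> {1..<int k - M}" using free_per_iff[OF S(1)] S(4) k by auto
    have "S \<subseteq> {0..<int k - M}" using S1 by auto
    hence afS: "afree a S" using afree_per_small[of S k] S(2) by auto
    define R where "R = (\<lambda>z. z + - 1) ` S"
    have SR: "S = (\<lambda>z. z + 1) ` R" unfolding R_def by (auto simp: image_image)
    have "R \<subseteq> {0..<int (nat (int k - M - 1))}" using S1 k unfolding R_def by auto
    moreover have "afree a R" unfolding R_def using afS afree_translate2 by blast
    moreover have "card R = m" unfolding R_def using S(3) card_translate[of "-1" S] by (simp add: add.commute)
    ultimately have "R \<in> Paths a (nat (int k - M - 1)) m" unfolding Paths_def by auto
    thus "S \<in> (\<lambda>R. (\<lambda>z. z + 1) ` R) ` Paths a (nat (int k - M - 1)) m" using SR by auto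
  next
    fix S assume "S \<in> (\<lambda>R. (\<lambda>z. z + 1) ` R) ` Paths a (nat (int k - M - 1)) m"
    then obtain R where R: "R \<in> Paths a (nat (int k - M - 1)) m" and SR: "S = (\<lambda>z. z + 1) ` R" by auto
    have Rs: "R \<subseteq> {0..<int (nat (int k - M - 1))}" "afree a R" "card R = m" using R unfolding Paths_def by auto
    have S1: "S \<subseteq> {1..<int k - M}" using Rs(1) k unfolding SR by auto
    hence S0: "S \<subseteq> {0..<int k}" using M1 by auto
    have "afree a S" unfolding SR using Rs(2) afree_translate2 by blast
    moreover have "S \<subseteq> {0..<int k - M}" using S1 by auto
    ultimately have "afree a (per k S)" using afree_per_small[of S k] by auto
    moreover have "card S = m" unfolding SR using Rs(3) card_translate[of 1 R] by (simp add: add.commute)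
    moreover have "free M (per k S) 0" using free_per_iff[OF S0] S1 k by auto
    ultimately show "S \<in> {S \<in> Cyc a k m. free M (per k S) 0}" using S0 unfolding Cyc_def by auto
  qed
  show ?thesis unfolding eqset pc_def by (rule card_image[OF image_set_inj])
qed

end


context
  fixes a :: "nat set" and M :: int
  assumes M1: "1 \<le> M" and bnd: "\<forall>r\<in>a. int r \<le> M"
begin

lemma rod0_iff:
  assumes S: "S \<subseteq> {0..<int k}" and cl: "cluster M C" and k: "Max C + 2 * M < int k"
  shows "rod M (per k S) 0 C \<longleftrightarrow> S \<inter> {0..Max C + M} = C \<and> S \<inter> {int k - M..<int k} = {}"
proof -
  have Cn: "\<forall>c\<in>C. 0 \<le> c \<and> c \<le> Max C" using cl cluster_nonneg cluster_Max_ge by blast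
  have id: "(\<lambda>c. 0 + c) ` C = C" by simp
  have MC0: "0 \<le> Max C" using Cn cluster_Max_in[OF cl] by auto
  have in0: "u \<in> per k S \<longleftrightarrow> u \<in> S" if "0 \<le> u" "u \<le> Max C + M" for u
    using per_small[OF S, of u] that k M1 by auto
  have inneg: "u \<in> per k S \<longleftrightarrow> u + int k \<in> S" if "- M \<le> u" "u < 0" for u
  proof -
    have "u mod int k = u + int k" using that k M1 MC0 by (intro mod_neg_small) auto
    thus ?thesis unfolding per_def by simp
  qed
  show ?thesis unfolding rod_def id
  proof
    assume r: "per k S \<inter> {0 - M..0 + Max C + M} = C"
    have 1: "S \<inter> {0..Max C + M} = C"
    proof (intro equalityI subsetI)
      fix u assume "u \<in> S \<inter> {0..Max C + M}"
      thus "u \<in> C" using in0 r M1 by auto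
    next
      fix u assume u: "u \<in> C"
      hence "u \<in> per k S" using r by auto
      thus "u \<in> S \<inter> {0..Max C + M}" using in0 u Cn M1 by auto
    qed
    have 2: "S \<inter> {int k - M..<int k} = {}"
    proof (rule ccontr)
      assume "S \<inter> {int k - M..<int k} \<noteq> {}"
      then obtain z where z: "z \<in> S" "int k - M \<le> z" "z < int k" by auto
      hence "z - int k \<in> per k S" using inneg[of "z - int k"] by auto
      hence "z - int k \<in> per k S \<inter> {0 - M..0 + Max C + M}" using z MC0 M1 by auto
      hence "z - int k \<in> C" using r by blast
      thus False using Cn z by auto
    qed
    show "S \<inter> {0..Max C + M} = C \<and> S \<inter> {int k - M..<int k} = {}" using 1 2 by simp
  next
    assume r: "S \<inter> {0..Max C + M} = C \<and> S \<inter> {int k - M..<int k} = {}"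
    show "per k S \<inter> {0 - M..0 + Max C + M} = C"
    proof (intro equalityI subsetI)
      fix u assume u: "u \<in> per k S \<inter> {0 - M..0 + Max C + M}"
      show "u \<in> C"
      proof (cases "u < 0")
        case True
        hence "u + int k \<in> S" using inneg u by auto
        moreover have "u + int k \<in> {int k - M..<int k}" using True u by auto
        ultimately show ?thesis using r by blast
      next
        case False thus ?thesis using in0 u r by auto
      qed
    next
      fix u assume u: "u \<in> C"
      hence "u \<in> S" using r by auto
      thus "u \<in> per k S \<inter> {0 - M..0 + Max C + M}" using in0 u Cn M1 by auto
    qed
  qed
qed

definition gR :: "int set \<Rightarrow> int set \<Rightarrow> int set" where
  "gR C R = C \<union> (\<lambda>z. z + (Max C + M + 1)) ` R"

lemma Cyc_rod0_card:
  assumes C: "C \<in> Clus a M B" and k: "B + 2 * M + 1 \<le> int k"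
  shows "card {S \<in> Cyc a k m. rod M (per k S) 0 C} =
    (if card C \<le> m then pc a (nat (int k - Max C - 2 * M - 1)) (m - card C) else 0)"
proof -
  define D where "D = Max C + M + 1"
  have cl: "cluster M C" and afC: "afree a C" and CB: "C \<subseteq> {0..B}" using C unfolding Clus_def by auto
  have Cn: "\<forall>c\<in>C. 0 \<le> c \<and> c \<le> Max C" using cl cluster_nonneg cluster_Max_ge by blast
  have MCB: "Max C \<le> B" using CB cluster_Max_in[OF cl] by auto
  have MC0: "0 \<le> Max C" using Cn cl unfolding cluster_def by auto
  have kk: "Max C + 2 * M < int k" using MCB k by auto
  have finC: "finite C" using cl unfolding cluster_def by auto
  show ?thesis
  proof (cases "card C \<le> m")
    case False
    have e: "{S \<in> Cyc a k m. rod M (per k S) 0 C} = {}"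
    proof (rule ccontr)
      assume "\<not> ?thesis"
      then obtain S where S: "S \<in> Cyc a k m" "rod M (per k S) 0 C" by auto
      have Ss: "S \<subseteq> {0..<int k}" "card S = m" using S unfolding Cyc_def by auto
      have "C \<subseteq> S" using rod0_iff[OF Ss(1) cl kk] S(2) by auto
      hence "card C \<le> card S" using Ss(1) finite_subset by (intro card_mono) auto
      thus False using Ss False by simp
    qed
    show ?thesis unfolding e using False by simp
  next
    case True
    have eqset: "{S \<in> Cyc a k m. rod M (per k S) 0 C} = gR C ` Paths a (nat (int k - Max C - 2 * M - 1)) (m - card C)"
    proof (intro equalityI subsetI)
      fix S assume "S \<in> {S \<in> Cyc a k m. rod M (per k S) 0 C}"
      hence S: "S \<subseteq> {0..<int k}" "afree a (per k S)" "card S = m" "rod M (per k S) 0 C"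
        unfolding Cyc_def by auto
      have r: "S \<inter> {0..Max C + M} = C" "S \<inter> {int k - M..<int k} = {}" using rod0_iff[OF S(1) cl kk] S(4) by auto
      have SkM: "S \<subseteq> {0..<int k - M}"
      proof
        fix x assume x: "x \<in> S"
        hence "0 \<le> x" "x < int k" using S(1) by auto
        moreover have "x \<notin> {int k - M..<int k}" using x r(2) by auto
        ultimately show "x \<in> {0..<int k - M}" by auto
      qed
      have afS: "afree a S" using afree_per_small[OF M1 bnd SkM] S(2) by simp
      define R where "R = {z. 0 \<le> z \<and> z + D \<in> S}"
      have SR: "S = gR C R"
      proof (intro equalityI subsetI)
        fix x assume x: "x \<in> S"
        show "x \<in> gR C R"
        proof (cases "x \<le> Max C + M")
          case True
          have "x \<in> S \<inter> {0..Max C + M}" using x True S(1) by auto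
          thus ?thesis using r(1) unfolding gR_def by auto
        next
          case False
          hence "x - D \<in> R" using x unfolding R_def D_def by auto
          thus ?thesis unfolding gR_def D_def[symmetric] by (intro UnI2 image_eqI[of _ _ "x - D"]) auto
        qed
      next
        fix x assume "x \<in> gR C R"
        thus "x \<in> S" using r(1) unfolding gR_def D_def[symmetric] R_def by auto
      qed
      have Rsub: "R \<subseteq> {0..<int (nat (int k - Max C - 2 * M - 1))}"
      proof
        fix z assume "z \<in> R"
        hence "0 \<le> z" "z + D \<in> S" unfolding R_def by auto
        hence "z + D < int k - M" using SkM by auto
        thus "z \<in> {0..<int (nat (int k - Max C - 2 * M - 1))}" using \<open>0 \<le> z\<close> unfolding D_def by auto
      qed
      have imgR: "(\<lambda>z. z + D) ` R \<subseteq> S" unfolding R_def by auto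
      have afR: "afree a R" using afree_subset[OF afS imgR] afree_translate2 by blast
      have finR: "finite R" using Rsub finite_subset by blast
      have disj: "C \<inter> (\<lambda>z. z + D) ` R = {}" using Cn M1 unfolding R_def D_def by fastforce
      have "card S = card C + card R" unfolding SR gR_def D_def[symmetric]
        using card_Un_disjoint[OF finC finite_imageI[OF finR] disj] card_translate[of D R]
        by (simp add: add.commute)
      hence "card R = m - card C" using S(3) by simp
      hence "R \<in> Paths a (nat (int k - Max C - 2 * M - 1)) (m - card C)"
        using Rsub afR unfolding Paths_def by auto
      thus "S \<in> gR C ` Paths a (nat (int k - Max C - 2 * M - 1)) (m - card C)" using SR by auto
    next
      fix S assume "S \<in> gR C ` Paths a (nat (int k - Max C - 2 * M - 1)) (m - card C)"
      then obtain R where R: "R \<in> Paths a (nat (int k - Max C - 2 * M - 1)) (m - card C)" and SR: "S = gR C R" by auto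
      have R0: "R \<subseteq> {0..<int (nat (int k - Max C - 2 * M - 1))}" "afree a R" "card R = m - card C"
        using R unfolding Paths_def by auto
      have Rs: "R \<subseteq> {0..<int k - Max C - 2 * M - 1}" using R0(1) by (simp only: ivl_nat)
      have finR: "finite R" using Rs finite_subset by blast
      have SkM: "S \<subseteq> {0..<int k - M}"
      proof
        fix x assume "x \<in> S"
        then consider "x \<in> C" | z where "z \<in> R" "x = z + D" unfolding SR gR_def D_def by auto
        thus "x \<in> {0..<int k - M}"
        proof cases
          case 1 thus ?thesis using Cn kk M1 by fastforce
        next
          case 2
          have "0 \<le> z" "z < int k - Max C - 2 * M - 1" using 2(1) Rs by auto
          thus ?thesis using 2(2) MC0 M1 unfolding D_def by auto
        qed
      qed
      have S0: "S \<subseteq> {0..<int k}" using SkM M1 by auto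
      have sep: "\<forall>u\<in>C. \<forall>v\<in>(\<lambda>z. z + D) ` R. u + M < v" using Cn Rs unfolding D_def by fastforce
      have afS: "afree a S" unfolding SR gR_def D_def[symmetric]
        by (rule afree_union_sep[OF afC _ sep bnd]) (simp add: afree_translate2 R0(2))
      have disj: "C \<inter> (\<lambda>z. z + D) ` R = {}" using sep M1 by fastforce
      have cS: "card S = m" unfolding SR gR_def D_def[symmetric]
        using card_Un_disjoint[OF finC finite_imageI[OF finR] disj] card_translate[of D R] R0(3) True
        by (simp add: add.commute)
      have r1: "S \<inter> {0..Max C + M} = C"
      proof (intro equalityI subsetI)
        fix x assume "x \<in> S \<inter> {0..Max C + M}"
        thus "x \<in> C" using Rs unfolding SR gR_def D_def by auto
      next
        fix x assume "x \<in> C" thus "x \<in> S \<inter> {0..Max C + M}" using Cn M1 unfolding SR gR_def by auto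
      qed
      have r2: "S \<inter> {int k - M..<int k} = {}" using SkM by auto
      have "rod M (per k S) 0 C" using rod0_iff[OF S0 cl kk] r1 r2 by simp
      moreover have "afree a (per k S)" using afree_per_small[OF M1 bnd SkM] afS by simp
      ultimately show "S \<in> {S \<in> Cyc a k m. rod M (per k S) 0 C}" using S0 cS unfolding Cyc_def by auto
    qed
    have inj: "inj_on (gR C) (Paths a (nat (int k - Max C - 2 * M - 1)) (m - card C))"
    proof (rule inj_onI)
      fix R1 R2 assume R: "R1 \<in> Paths a (nat (int k - Max C - 2 * M - 1)) (m - card C)"
        "R2 \<in> Paths a (nat (int k - Max C - 2 * M - 1)) (m - card C)" and e: "gR C R1 = gR C R2"
      have "R1 = {z. 0 \<le> z \<and> z + D \<in> gR C R1}" "R2 = {z. 0 \<le> z \<and> z + D \<in> gR C R2}"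
      proof -
        have noC: "\<And>x. 0 \<le> x \<Longrightarrow> x + (Max C + M + 1) \<notin> C"
        proof
          fix x assume "0 \<le> x" "x + (Max C + M + 1) \<in> C"
          thus False using Cn M1 by force
        qed
        have "R1 \<subseteq> {0..}" "R2 \<subseteq> {0..}" using R unfolding Paths_def by auto
        thus "R1 = {z. 0 \<le> z \<and> z + D \<in> gR C R1}" "R2 = {z. 0 \<le> z \<and> z + D \<in> gR C R2}"
          using noC unfolding gR_def D_def by auto
      qed
      thus "R1 = R2" using e by simp
    qed
    show ?thesis unfolding eqset pc_def using card_image[OF inj] True by simp
  qed
qed

end


context
  fixes a :: "nat set" and M :: int and n :: nat
  assumes M1: "1 \<le> M" and bnd: "\<forall>r\<in>a. int r \<le> M"
begin

lemma card_G_rot: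
  assumes k: "0 < k"
  shows "card {S \<in> Cyc a k m. rod M (per k S) (- d) C} = card {S \<in> Cyc a k m. rod M (per k S) 0 C}"
proof -
  have e1: "{S \<in> Cyc a k m. rod M (per k S) 0 C} =
     {S. S \<subseteq> {0..<int k} \<and> card S = m \<and> (\<lambda>T. afree a T \<and> rod M T 0 C) (per k S)}"
    unfolding Cyc_def by auto
  have e2: "{S \<in> Cyc a k m. rod M (per k S) (- d) C} =
     {S. S \<subseteq> {0..<int k} \<and> card S = m \<and> (\<lambda>T. afree a T \<and> rod M T 0 C) ((\<lambda>z. z + d) ` per k S)}"
    unfolding Cyc_def using rod_translate[of M d _ "- d" C] afree_translate2[of a d] by auto
  show ?thesis unfolding e1 e2 by (rule card_rotate_pred[OF k, symmetric])
qed

lemma cyc_formula: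
  assumes mn: "m \<le> n" and k: "2 * (int n + 3) * M + 2 \<le> int k"
  shows "cyc a k m = pc a (nat (int k - M - 1)) m +
    (\<Sum>C\<in>Clus a M (2 * int n * M). nat (Max C + M + 1) *
       (if card C \<le> m then pc a (nat (int k - Max C - 2 * M - 1)) (m - card C) else 0))"
proof -
  define B where "B = 2 * int n * M"
  define Fr where "Fr = {S \<in> Cyc a k m. free M (per k S) 0}"
  define G where "G = (\<lambda>(C, d). {S \<in> Cyc a k m. rod M (per k S) (- d) C})"
  define IX where "IX = Sigma (Clus a M B) (\<lambda>C. {0..Max C + M})"
  have nM: "0 \<le> int n * M" using M1 by simp
  have kW: "2 * (int (m + 2) * M) + 1 \<le> int k"
  proof -
    have h: "int (m + 2) * M \<le> (int n + 2) * M" using mn M1 by (intro mult_right_mono) auto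
    have h2: "2 * ((int n + 2) * M) + 1 \<le> 2 * (int n + 3) * M + 2" using M1 by (simp add: algebra_simps)
    show ?thesis using h h2 k by linarith
  qed
  have kB: "B + 2 * M + 1 \<le> int k" using k M1 nM unfolding B_def by (simp add: algebra_simps)
  have kM: "M + 1 \<le> int k" using kB nM unfolding B_def by simp
  have kpos: "0 < k" using kM M1 by simp
  have finIX: "finite IX" unfolding IX_def using finite_Clus by auto
  have cover: "Cyc a k m = Fr \<union> (\<Union>p\<in>IX. G p)"
  proof (intro equalityI subsetI)
    fix S assume SC: "S \<in> Cyc a k m"
    hence S: "S \<subseteq> {0..<int k}" "afree a (per k S)" "card S = m" unfolding Cyc_def by auto
    show "S \<in> Fr \<union> (\<Union>p\<in>IX. G p)"
    proof (cases "free M (per k S) 0")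
      case True thus ?thesis using SC unfolding Fr_def by auto
    next
      case False
      define W where "W = int (m + 2) * M"
      have pw: "finite (per k S \<inter> {0 - W .. 0 + W})" "card (per k S \<inter> {0 - W .. 0 + W}) \<le> m"
        using per_window[OF S(1), of W 0] kW S(3) unfolding W_def by auto
      obtain y C where cl: "cluster M C" and r: "rod M (per k S) y C" and cov: "y \<le> 0" "0 \<le> y + Max C + M"
        and Cb: "C \<subseteq> {0 .. 2 * int m * M}" and img: "(\<lambda>c. y + c) ` C \<subseteq> per k S \<inter> {0 - W .. 0 + W}"
        using rod_exists[OF M1 W_def pw False] by blast
      have afC: "afree a C" using afree_subset[OF S(2)] img afree_translate[of a y C] by auto
      have "2 * int m * M \<le> B" unfolding B_def using mn M1 by (intro mult_right_mono) auto
      hence "C \<in> Clus a M B" using cl afC Cb unfolding Clus_def by auto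
      moreover have "- y \<in> {0..Max C + M}" using cov by auto
      ultimately have "(C, - y) \<in> IX" unfolding IX_def by auto
      moreover have "S \<in> G (C, - y)" using SC r unfolding G_def by auto
      ultimately show ?thesis by blast
    qed
  next
    fix S assume "S \<in> Fr \<union> (\<Union>p\<in>IX. G p)"
    thus "S \<in> Cyc a k m" unfolding Fr_def G_def by auto
  qed
  have clIX: "cluster M C" if "(C, d) \<in> IX" for C d using that unfolding IX_def Clus_def by auto
  have disj1: "Fr \<inter> (\<Union>p\<in>IX. G p) = {}"
  proof (rule ccontr)
    assume "\<not> ?thesis"
    then obtain S C d where "S \<in> Fr" "(C, d) \<in> IX" "S \<in> G (C, d)" by auto
    hence "free M (per k S) 0" "rod M (per k S) (- d) C" "cluster M C" "0 \<le> d" "d \<le> Max C + M"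
      unfolding Fr_def G_def IX_def Clus_def by auto
    thus False using rod_free_excl[of M C "per k S" "- d" 0] by auto
  qed
  have disj2: "G p \<inter> G q = {}" if "p \<in> IX" "q \<in> IX" "p \<noteq> q" for p q
  proof (rule ccontr)
    obtain C d D e where pq: "p = (C, d)" "q = (D, e)" by (cases p, cases q) auto
    assume "\<not> ?thesis"
    then obtain S where "S \<in> G p" "S \<in> G q" by auto
    hence "rod M (per k S) (- d) C" "rod M (per k S) (- e) D" unfolding G_def pq by auto
    moreover have "cluster M C" "cluster M D" "0 \<le> d" "d \<le> Max C + M" "0 \<le> e" "e \<le> Max D + M"
      using that clIX unfolding pq IX_def by auto
    ultimately have "- d = - e \<and> C = D" using rod_unique[of M C D "per k S" "- d" "- e" 0] M1 by auto
    thus False using that pq by auto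
  qed
  have finG: "finite (G p)" for p unfolding G_def by (cases p) (auto intro: finite_subset[OF _ finite_Cyc])
  have "cyc a k m = card Fr + card (\<Union>p\<in>IX. G p)"
  proof -
    have "finite Fr" unfolding Fr_def by (auto intro: finite_subset[OF _ finite_Cyc])
    moreover have "finite (\<Union>p\<in>IX. G p)" using finG finIX by auto
    ultimately show ?thesis unfolding cyc_def cover by (rule card_Un_disjoint[OF _ _ disj1])
  qed
  also have "card (\<Union>p\<in>IX. G p) = (\<Sum>p\<in>IX. card (G p))"
    by (rule card_UN_disjoint[OF finIX]) (auto simp: finG disj2)
  also have "\<dots> = (\<Sum>p\<in>IX. card {S \<in> Cyc a k m. rod M (per k S) 0 (fst p)})"
    by (rule sum.cong[OF refl]) (auto simp: G_def card_G_rot[OF kpos])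
  also have "\<dots> = (\<Sum>C\<in>Clus a M B. \<Sum>d\<in>{0..Max C + M}. card {S \<in> Cyc a k m. rod M (per k S) 0 C})"
    unfolding IX_def by (subst sum.Sigma) (auto simp: finite_Clus case_prod_beta)
  also have "\<dots> = (\<Sum>C\<in>Clus a M B. nat (Max C + M + 1) *
       (if card C \<le> m then pc a (nat (int k - Max C - 2 * M - 1)) (m - card C) else 0))"
  proof (rule sum.cong[OF refl])
    fix C assume C: "C \<in> Clus a M B"
    have "card {0..Max C + M} = nat (Max C + M + 1)" by simp
    thus "(\<Sum>d\<in>{0..Max C + M}. card {S \<in> Cyc a k m. rod M (per k S) 0 C}) =
       nat (Max C + M + 1) * (if card C \<le> m then pc a (nat (int k - Max C - 2 * M - 1)) (m - card C) else 0)"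
      using Cyc_rod0_card[OF M1 bnd C kB] by simp
  qed
  finally show ?thesis unfolding Fr_def B_def using Cyc_free_card[OF M1 bnd kM] by simp
qed

end


lemma card_Cyc_mem_rot:
  assumes k: "0 < k" and y: "y \<in> {0..<int k}"
  shows "card {S \<in> Cyc a k m. y \<in> S} = card {S \<in> Cyc a k m. 0 \<in> S}"
proof -
  have e1: "{S \<in> Cyc a k m. 0 \<in> S} =
     {S. S \<subseteq> {0..<int k} \<and> card S = m \<and> (\<lambda>T. afree a T \<and> 0 \<in> T) (per k S)}"
    unfolding Cyc_def using per_small[of _ k 0] k by auto
  have e2: "{S \<in> Cyc a k m. y \<in> S} =
     {S. S \<subseteq> {0..<int k} \<and> card S = m \<and> (\<lambda>T. afree a T \<and> 0 \<in> T) ((\<lambda>z. z + - y) ` per k S)}"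
  proof -
    have "0 \<in> (\<lambda>z. z + - y) ` per k S \<longleftrightarrow> y \<in> per k S" for S by (auto simp: image_iff)
    thus ?thesis unfolding Cyc_def using per_small[of _ k y] y afree_translate2[of a "- y"] by auto
  qed
  show ?thesis unfolding e1 e2 by (rule card_rotate_pred[OF k, symmetric])
qed

lemma cyc_marking:
  assumes k: "0 < k"
  shows "m * cyc a k m = k * card {S \<in> Cyc a k m. 0 \<in> S}"
proof -
  have "m * cyc a k m = (\<Sum>S\<in>Cyc a k m. card S)" unfolding cyc_def Cyc_def by simp
  also have "\<dots> = (\<Sum>S\<in>Cyc a k m. \<Sum>y\<in>{0..<int k}. if y \<in> S then 1 else 0)"
  proof (rule sum.cong[OF refl])
    fix S assume "S \<in> Cyc a k m"
    hence "S \<subseteq> {0..<int k}" unfolding Cyc_def by auto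
    hence "S = {y \<in> {0..<int k}. y \<in> S}" by auto
    hence "card S = card {y \<in> {0..<int k}. y \<in> S}" by simp
    also have "\<dots> = (\<Sum>y\<in>{0..<int k}. if y \<in> S then 1 else 0)"
      by (simp add: sum.inter_filter[symmetric])
    finally show "card S = (\<Sum>y\<in>{0..<int k}. if y \<in> S then 1 else 0)" .
  qed
  also have "\<dots> = (\<Sum>y\<in>{0..<int k}. \<Sum>S\<in>Cyc a k m. if y \<in> S then 1 else 0)"
    by (rule sum.swap)
  also have "\<dots> = (\<Sum>y\<in>{0..<int k}. card {S \<in> Cyc a k m. 0 \<in> S})"
  proof (rule sum.cong[OF refl])
    fix y assume y: "y \<in> {0..<int k}"
    have "(\<Sum>S\<in>Cyc a k m. if y \<in> S then 1 else 0) = card {S \<in> Cyc a k m. y \<in> S}"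
      by (simp add: sum.inter_filter[symmetric] finite_Cyc)
    thus "(\<Sum>S\<in>Cyc a k m. if y \<in> S then 1 else (0::nat)) = card {S \<in> Cyc a k m. 0 \<in> S}"
      using card_Cyc_mem_rot[OF k y] by simp
  qed
  also have "\<dots> = k * card {S \<in> Cyc a k m. 0 \<in> S}" by simp
  finally show ?thesis .
qed


lemma indep_iff_afree:
  assumes pos: "\<forall>r\<in>a. 0 < r" and bnd: "\<forall>r\<in>a. int r \<le> M" and k: "M < int k"
    and B: "B \<subseteq> {0..<k}"
  shows "(\<forall>i\<in>B. \<forall>j\<in>B. \<not> circ_adj a k i j) \<longleftrightarrow> afree a (per k (int ` B))"
proof
  assume nadj: "\<forall>i\<in>B. \<forall>j\<in>B. \<not> circ_adj a k i j"
  show "afree a (per k (int ` B))" unfolding afree_def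
  proof (intro ballI notI)
    fix u r assume u: "u \<in> per k (int ` B)" and r: "r \<in> a" and ur: "u + int r \<in> per k (int ` B)"
    have k0: "0 < int k" using k bnd r pos by force
    define i where "i = nat (u mod int k)"
    define j where "j = nat ((u + int r) mod int k)"
    have iB: "i \<in> B" using u unfolding per_def i_def by auto
    have jB: "j \<in> B" using ur unfolding per_def j_def by auto
    have ii: "int i = u mod int k" unfolding i_def using k0 by simp
    have jj: "int j = (u + int r) mod int k" unfolding j_def using k0 by simp
    have rk: "0 < int r" "int r < int k" using pos bnd r k by force+
    have "(int j - int i) mod int k = ((u + int r) - u) mod int k" unfolding ii jj
      by (simp add: mod_diff_eq)
    hence d: "(int j - int i) mod int k = int r mod int k" by simp
    have "i \<noteq> j"
    proof
      assume "i = j"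
      hence "int r mod int k = 0" using d by simp
      thus False using rk by simp
    qed
    hence "circ_adj a k i j" unfolding circ_adj_def using d r by blast
    thus False using nadj iB jB by blast
  qed
next
  assume af: "afree a (per k (int ` B))"
  show "\<forall>i\<in>B. \<forall>j\<in>B. \<not> circ_adj a k i j"
  proof (intro ballI notI)
    fix i j assume iB: "i \<in> B" and jB: "j \<in> B" and adj: "circ_adj a k i j"
    have mem: "int x \<in> per k (int ` B)" if "x \<in> B" for x using that B unfolding per_def by auto
    have key: False if xB: "x \<in> B" "y \<in> B" and r: "r \<in> a" and e: "(int y - int x) mod int k = int r mod int k" for x y r
    proof -
      have "(int x + int r) mod int k = (int x + int r mod int k) mod int k" by (simp add: mod_add_right_eq)
      also have "\<dots> = (int x + (int y - int x) mod int k) mod int k" using e by simp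
      also have "\<dots> = int y mod int k" by (simp add: mod_add_right_eq)
      finally have "int x + int r \<in> per k (int ` B)" using mem[OF xB(2)] unfolding per_def by simp
      thus False using af mem[OF xB(1)] r unfolding afree_def by blast
    qed
    from adj obtain r where r: "r \<in> a" and "(int i - int j) mod int k = int r mod int k \<or> (int j - int i) mod int k = int r mod int k"
      unfolding circ_adj_def by blast
    thus False using key[OF jB iB r] key[OF iB jB r] by blast
  qed
qed


definition Ind :: "nat set \<Rightarrow> nat \<Rightarrow> (nat \<Rightarrow> nat) \<Rightarrow> nat \<Rightarrow> (nat \<times> nat) set set" where
  "Ind a s k n = {S. union_indep a s k S \<and> card S = n}"

lemma union_verts_eq: "union_verts s k = Sigma {..<s} (\<lambda>t. {..<k t})"
  unfolding union_verts_def by auto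

lemma finite_union_verts: "finite (union_verts s k)"
  unfolding union_verts_eq by auto

lemma finite_Ind: "finite (Ind a s k n)"
proof -
  have "Ind a s k n \<subseteq> Pow (union_verts s k)" unfolding Ind_def union_indep_def by auto
  moreover have "finite (Pow (union_verts s k))" using finite_union_verts by simp
  ultimately show ?thesis by (rule finite_subset)
qed

lemma num_indep_Ind: "num_indep a n s k = card (Ind a s k n)"
  unfolding num_indep_def Ind_def by simp

lemma num_indep_Suc:
  assumes pos: "\<forall>r\<in>a. 0 < r" and bnd: "\<forall>r\<in>a. int r \<le> M" and k: "M < int (k s)"
  shows "num_indep a n (Suc s) k = (\<Sum>j\<le>n. num_indep a j s k * cyc a (k s) (n - j))"
proof -
  define h where "h = (\<lambda>(A, B). A \<union> (\<lambda>i. (s, nat i)) ` B)"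
  define D where "D = (\<Union>j\<in>{..n}. Ind a s k j \<times> Cyc a (k s) (n - j))"
  have Afst: "fst v < s" if "A \<in> Ind a s k j" "v \<in> A" for A j v
    using that unfolding Ind_def union_indep_def union_verts_def by auto
  have Bnn: "B \<subseteq> {0..<int (k s)}" if "B \<in> Cyc a (k s) m" for B m
    using that unfolding Cyc_def by auto
  have eq: "Ind a (Suc s) k n = h ` D"
  proof (intro equalityI subsetI)
    fix S assume SI: "S \<in> Ind a (Suc s) k n"
    hence Sv: "S \<subseteq> union_verts (Suc s) k" and nadj: "\<forall>v\<in>S. \<forall>w\<in>S. \<not> union_adj a k v w"
      and cS: "card S = n"
      unfolding Ind_def union_indep_def by auto
    have finS: "finite S" using Sv finite_union_verts finite_subset by blast
    define A where "A = S \<inter> {v. fst v < s}"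
    define S2 where "S2 = S \<inter> {v. fst v = s}"
    define B' where "B' = snd ` S2"
    define B where "B = int ` B'"
    have SA: "S = A \<union> S2" using Sv unfolding A_def S2_def union_verts_def by auto
    have S2e: "S2 = (\<lambda>i. (s, i)) ` B'" unfolding B'_def S2_def by force
    have hS: "h (A, B) = S" unfolding h_def B_def using SA S2e by (auto simp: image_image)
    have disj: "A \<inter> S2 = {}" unfolding A_def S2_def by auto
    have cardS: "card S = card A + card S2" using SA card_Un_disjoint[OF _ _ disj] finS
      unfolding A_def S2_def by auto
    have injsnd: "inj_on snd S2" unfolding S2_def by (rule inj_onI) (auto simp: prod_eq_iff)
    have cB: "card B = card S2" unfolding B_def B'_def
      using card_image[OF injsnd] card_image[of int "snd ` S2"] by (simp add: inj_on_def)
    have B'sub: "B' \<subseteq> {0..<k s}" using Sv unfolding B'_def S2_def union_verts_def by auto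
    have "\<forall>i\<in>B'. \<forall>j\<in>B'. \<not> circ_adj a (k s) i j"
    proof (intro ballI notI)
      fix i j assume "i \<in> B'" "j \<in> B'" "circ_adj a (k s) i j"
      hence "(s, i) \<in> S" "(s, j) \<in> S" "union_adj a k (s, i) (s, j)" unfolding B'_def S2_def union_adj_def by auto
      thus False using nadj by blast
    qed
    hence afB: "afree a (per (k s) B)" unfolding B_def using indep_iff_afree[OF pos bnd k B'sub] by simp
    have BC: "B \<in> Cyc a (k s) (n - card A)" unfolding Cyc_def using afB cB cardS cS B'sub unfolding B_def by auto
    have AI: "A \<in> Ind a s k (card A)" unfolding Ind_def union_indep_def
      using Sv nadj unfolding A_def union_verts_def by auto
    have "card A \<le> n" using cardS cS by simp
    hence "(A, B) \<in> D" unfolding D_def using AI BC by auto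
    thus "S \<in> h ` D" using hS by force
  next
    fix S assume "S \<in> h ` D"
    then obtain A B j where j: "j \<le> n" and AI: "A \<in> Ind a s k j" and BC: "B \<in> Cyc a (k s) (n - j)"
      and S: "S = A \<union> (\<lambda>i. (s, nat i)) ` B" unfolding D_def h_def by auto
    have Ai: "union_indep a s k A" "card A = j" using AI unfolding Ind_def by auto
    have Bs: "B \<subseteq> {0..<int (k s)}" "afree a (per (k s) B)" "card B = n - j" using BC unfolding Cyc_def by auto
    define B' where "B' = nat ` B"
    have BB': "int ` B' = B" unfolding B'_def using Bs(1) by (force simp: image_image)
    have B'sub: "B' \<subseteq> {0..<k s}" unfolding B'_def using Bs(1) by force
    have nadjB: "\<forall>i\<in>B'. \<forall>j\<in>B'. \<not> circ_adj a (k s) i j"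
      using indep_iff_afree[OF pos bnd k B'sub] BB' Bs(2) by simp
    have img: "(\<lambda>i. (s, nat i)) ` B = (\<lambda>i. (s, i)) ` B'" unfolding B'_def by (auto simp: image_image)
    have Asub: "A \<subseteq> union_verts s k" using Ai unfolding union_indep_def by auto
    have sub: "S \<subseteq> union_verts (Suc s) k" unfolding S img using Asub B'sub unfolding union_verts_def by auto
    have nadj: "\<forall>v\<in>S. \<forall>w\<in>S. \<not> union_adj a k v w"
    proof (intro ballI notI)
      fix v w assume v: "v \<in> S" and w: "w \<in> S" and adj: "union_adj a k v w"
      have fe: "fst v = fst w" using adj unfolding union_adj_def by auto
      consider "v \<in> A" "w \<in> A" | "v \<in> A" "w \<notin> A" | "v \<notin> A" "w \<in> A" | "v \<notin> A" "w \<notin> A" by blast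
      thus False
      proof cases
        case 1 thus False using Ai adj unfolding union_indep_def by blast
      next
        case 2 hence "fst w = s" "fst v < s" using w S Afst[OF AI] by auto
        thus False using fe by simp
      next
        case 3 hence "fst v = s" "fst w < s" using v S Afst[OF AI] by auto
        thus False using fe by simp
      next
        case 4
        then obtain i j where "v = (s, i)" "w = (s, j)" "i \<in> B'" "j \<in> B'" using v w unfolding S img by auto
        thus False using adj nadjB unfolding union_adj_def by auto
      qed
    qed
    have finA: "finite A" using Asub finite_union_verts finite_subset by blast
    have disj: "A \<inter> (\<lambda>i. (s, i)) ` B' = {}" using Afst[OF AI] by fastforce
    have "card ((\<lambda>i. (s, i)) ` B') = card B'" by (rule card_image) (simp add: inj_on_def)
    also have "card B' = card B" using BB' card_image[of int B'] by (metis inj_on_of_nat)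
    finally have "card S = n" unfolding S img using card_Un_disjoint[OF finA _ disj] B'sub Ai(2) Bs(3) j
      finite_subset[OF B'sub] by simp
    thus "S \<in> Ind a (Suc s) k n" unfolding Ind_def union_indep_def using sub nadj by auto
  qed
  have inj: "inj_on h D"
  proof (rule inj_onI)
    fix p q assume p: "p \<in> D" and q: "q \<in> D" and e: "h p = h q"
    obtain A B where pAB: "p = (A, B)" by (cases p)
    obtain A' B' where qAB: "q = (A', B')" by (cases q)
    have rec: "A = h (A, B) \<inter> {v. fst v < s} \<and> B = int ` snd ` (h (A, B) \<inter> {v. fst v = s})"
      if ABD: "(A, B) \<in> D" for A B
    proof -
      obtain j where AI: "A \<in> Ind a s k j" and BC: "B \<in> Cyc a (k s) (n - j)" using ABD unfolding D_def by auto
      have "A = h (A, B) \<inter> {v. fst v < s}" unfolding h_def using Afst[OF AI] by auto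
      moreover have "B = int ` snd ` (h (A, B) \<inter> {v. fst v = s})"
      proof -
        have "h (A, B) \<inter> {v. fst v = s} = (\<lambda>i. (s, nat i)) ` B" unfolding h_def using Afst[OF AI] by auto
        hence "int ` snd ` (h (A, B) \<inter> {v. fst v = s}) = (\<lambda>i. int (nat i)) ` B" by (simp add: image_image)
        also have "\<dots> = B" using Bnn[OF BC] by (force simp: image_iff)
        finally show ?thesis by simp
      qed
      ultimately show ?thesis by simp
    qed
    show "p = q" using rec[of A B] rec[of A' B'] p q e unfolding pAB qAB by auto
  qed
  have finD: "finite (Ind a s k j \<times> Cyc a (k s) (n - j))" for j using finite_Ind finite_Cyc by auto
  have disjD: "(Ind a s k i \<times> Cyc a (k s) (n - i)) \<inter> (Ind a s k j \<times> Cyc a (k s) (n - j)) = {}"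
    if "i \<noteq> j" for i j using that unfolding Ind_def by auto
  have "num_indep a n (Suc s) k = card D" unfolding num_indep_Ind eq using card_image[OF inj] by simp
  also have "\<dots> = (\<Sum>j\<le>n. card (Ind a s k j \<times> Cyc a (k s) (n - j)))"
    unfolding D_def by (rule card_UN_disjoint) (auto simp: finD disjD)
  also have "\<dots> = (\<Sum>j\<le>n. num_indep a j s k * cyc a (k s) (n - j))"
    by (simp add: num_indep_Ind cyc_def card_cartesian_product)
  finally show ?thesis .
qed

lemma num_indep_0: "num_indep a n 0 k = (if n = 0 then 1 else 0)"
proof -
  have "{S. union_indep a 0 k S \<and> card S = n} = (if n = 0 then {{}} else {})"
    unfolding union_indep_def union_verts_def by auto
  thus ?thesis unfolding num_indep_def by simp
qed


definition eqm :: "nat \<Rightarrow> 'a::comm_ring_1 fps \<Rightarrow> 'a fps \<Rightarrow> bool" where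
  "eqm m f g \<longleftrightarrow> (\<forall>i\<le>m. f $ i = g $ i)"

lemma eqm_refl[simp]: "eqm m f f" unfolding eqm_def by simp
lemma eqm_sym: "eqm m f g \<Longrightarrow> eqm m g f" unfolding eqm_def by simp
lemma eqm_trans: "eqm m f g \<Longrightarrow> eqm m g h \<Longrightarrow> eqm m f h" unfolding eqm_def by simp
lemma eqm_le: "eqm m f g \<Longrightarrow> i \<le> m \<Longrightarrow> f $ i = g $ i" unfolding eqm_def by simp
lemma eqm_mono: "eqm m f g \<Longrightarrow> m' \<le> m \<Longrightarrow> eqm m' f g" unfolding eqm_def by simp

lemma eqm_mult_right: "eqm m f g \<Longrightarrow> eqm m (f * h) (g * h)"
  unfolding eqm_def fps_mult_nth by (auto intro!: sum.cong)

lemma eqm_mult_left: "eqm m f g \<Longrightarrow> eqm m (h * f) (h * g)"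
  using eqm_mult_right[of m f g h] by (simp add: mult.commute)

lemma eqm_mult: "eqm m f g \<Longrightarrow> eqm m f' g' \<Longrightarrow> eqm m (f * f') (g * g')"
  using eqm_mult_right eqm_mult_left eqm_trans by blast

lemma eqm_add: "eqm m f g \<Longrightarrow> eqm m f' g' \<Longrightarrow> eqm m (f + f') (g + g')"
  unfolding eqm_def by simp

lemma eqm_sum: "(\<And>x. x \<in> A \<Longrightarrow> eqm m (f x) (g x)) \<Longrightarrow> eqm m (sum f A) (sum g A)"
  unfolding eqm_def by (auto simp: fps_sum_nth intro!: sum.cong)

lemma eqm_power: "eqm m f g \<Longrightarrow> eqm m (f ^ k) (g ^ k)"
  by (induction k) (auto intro: eqm_mult)

definition intfps :: "rat fps \<Rightarrow> bool" where
  "intfps f \<longleftrightarrow> (\<forall>i. f $ i \<in> \<int>)"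

lemma intfps_mult: "intfps f \<Longrightarrow> intfps g \<Longrightarrow> intfps (f * g)"
  unfolding intfps_def fps_mult_nth by (auto intro!: Ints_sum Ints_mult)

lemma intfps_one: "intfps 1"
  unfolding intfps_def by (simp add: fps_one_nth)

lemma intfps_power: "intfps f \<Longrightarrow> intfps (f ^ k)"
  by (induction k) (auto intro: intfps_mult intfps_one)

lemma intfps_diff: "intfps f \<Longrightarrow> intfps g \<Longrightarrow> intfps (f - g)"
  unfolding intfps_def by auto

lemma intfps_inverse:
  assumes f0: "f $ 0 = 1" and fi: "intfps f"
  shows "intfps (inverse f)"
  unfolding intfps_def
proof
  fix i show "inverse f $ i \<in> \<int>"
  proof (induction i rule: less_induct)
    case (less i)
    show ?case
    proof (cases "i = 0")
      case True thus ?thesis using f0 by simp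
    next
      case False
      have "(f * inverse f) $ i = 0" using inverse_mult_eq_1[of f] f0 False by (simp add: mult.commute)
      hence "(\<Sum>j = 0..i. f $ j * inverse f $ (i - j)) = 0" by (simp add: fps_mult_nth)
      moreover have "{0..i} = insert 0 {1..i}" by auto
      ultimately have "inverse f $ i + (\<Sum>j = 1..i. f $ j * inverse f $ (i - j)) = 0" using f0 by simp
      hence "inverse f $ i = - (\<Sum>j = 1..i. f $ j * inverse f $ (i - j))" by (simp add: eq_neg_iff_add_eq_0)
      moreover have "(\<Sum>j = 1..i. f $ j * inverse f $ (i - j)) \<in> \<int>"
        using fi less False unfolding intfps_def by (intro Ints_sum Ints_mult) auto
      ultimately show ?thesis by simp
    qed
  qed
qed


locale setting =
  fixes a :: "nat set" and M :: int and n :: nat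
  assumes M1: "1 \<le> M" and bnd: "\<forall>r\<in>a. int r \<le> M" and pos: "\<forall>r\<in>a. 0 < r"
begin

definition P :: "nat \<Rightarrow> rat fps" where
  "P L = Abs_fps (\<lambda>m. of_nat (pc a L m))"

abbreviation Cl where "Cl \<equiv> Clus a M (2 * int n * M)"

definition dC :: "int set \<Rightarrow> nat" where "dC C = nat (Max C + M)"

definition Dd :: nat where "Dd = nat (2 * int n * M + M) + 1"

lemma P_nth: "P L $ m = of_nat (pc a L m)" unfolding P_def by simp

lemma pc0: "pc a L 0 = 1"
proof -
  have "Paths a L 0 = {{}}"
  proof (intro equalityI subsetI)
    fix S assume "S \<in> Paths a L 0"
    hence "S \<subseteq> {0..<int L}" "card S = 0" unfolding Paths_def by auto
    thus "S \<in> {{}}" using finite_subset by fastforce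
  qed (auto simp: Paths_def afree_def)
  thus ?thesis unfolding pc_def by simp
qed

lemma P0: "P L $ 0 = 1" by (simp add: P_nth pc0)

lemma intP: "intfps (P L)" unfolding intfps_def P_nth by simp

lemma Cl_facts:
  assumes "C \<in> Cl"
  shows "1 \<le> card C" "0 \<le> Max C" "Max C \<le> 2 * int n * M" "dC C < Dd" "cluster M C"
proof -
  have cl: "cluster M C" and sub: "C \<subseteq> {0..2 * int n * M}" using assms unfolding Clus_def by auto
  show "cluster M C" by (rule cl)
  have fin: "finite C" "0 \<in> C" using cl unfolding cluster_def by auto
  thus "1 \<le> card C" by (metis One_nat_def Suc_leI card_gt_0_iff empty_iff)
  show "0 \<le> Max C" using cluster_Max_ge[OF cl fin(2)] .
  show "Max C \<le> 2 * int n * M" using cluster_Max_in[OF cl] sub by auto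
  thus "dC C < Dd" unfolding dC_def Dd_def using M1 \<open>0 \<le> Max C\<close> by auto
qed

lemma Prec:
  assumes L: "2 * int n * M \<le> int L"
  shows "eqm n (P (Suc L)) (P L + (\<Sum>C\<in>Cl. fps_X ^ card C * P (L - dC C)))"
  unfolding eqm_def
proof (intro allI impI)
  fix m assume mn: "m \<le> n"
  have "P (Suc L) $ m = of_nat (pc a L m) + (\<Sum>C\<in>Cl. of_nat (if card C \<le> m \<and> Max C \<le> int L
        then pc a (nat (int L - Max C - M)) (m - card C) else 0))"
    unfolding P_nth using pc_rec[OF M1 bnd mn, of L] by simp
  also have "\<dots> = (P L + (\<Sum>C\<in>Cl. fps_X ^ card C * P (L - dC C))) $ m"
  proof -
    have "of_nat (if card C \<le> m \<and> Max C \<le> int L then pc a (nat (int L - Max C - M)) (m - card C) else 0)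
          = (fps_X ^ card C * P (L - dC C)) $ m" if C: "C \<in> Cl" for C
    proof -
      have "Max C \<le> int L" using Cl_facts(3)[OF C] L by simp
      moreover have "nat (int L - Max C - M) = L - dC C" unfolding dC_def using Cl_facts(2)[OF C] M1 by auto
      ultimately show ?thesis by (simp add: fps_X_power_mult_nth P_nth not_less)
    qed
    thus ?thesis by (simp add: fps_sum_nth P_nth)
  qed
  finally show "P (Suc L) $ m = (P L + (\<Sum>C\<in>Cl. fps_X ^ card C * P (L - dC C))) $ m" .
qed

end


context setting
begin

lemma step_coeff:
  assumes mn: "m \<le> n" and L: "2 * int n * M \<le> int L"
  shows "(P (Suc L) * Q) $ m = (P L * Q) $ m +
     (\<Sum>C\<in>Cl. if card C \<le> m then (P (L - dC C) * Q) $ (m - card C) else 0)"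
proof -
  have "(P (Suc L) * Q) $ m = ((P L + (\<Sum>C\<in>Cl. fps_X ^ card C * P (L - dC C))) * Q) $ m"
    using eqm_mult_right[OF eqm_mono[OF Prec[OF L] mn]] unfolding eqm_def by simp
  also have "\<dots> = (P L * Q) $ m + (\<Sum>C\<in>Cl. (fps_X ^ card C * (P (L - dC C) * Q)) $ m)"
    by (simp add: distrib_right sum_distrib_right fps_sum_nth mult.assoc)
  also have "\<dots> = (P L * Q) $ m +
     (\<Sum>C\<in>Cl. if card C \<le> m then (P (L - dC C) * Q) $ (m - card C) else 0)"
    by (simp add: fps_X_power_mult_nth not_less) (rule sum.cong, auto)
  finally show ?thesis .
qed

lemma shift:
  assumes F: "\<forall>L L'. m * Dd \<le> L \<longrightarrow> m * Dd \<le> L' \<longrightarrow> (P (Suc L) * P L') $ m = (P L * P (Suc L')) $ m"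
  shows "\<forall>L1 L2. m * Dd \<le> L1 \<longrightarrow> m * Dd \<le> L2 \<longrightarrow> (P L1 * P (L2 + d)) $ m = (P (L1 + d) * P L2) $ m"
proof (induction d)
  case 0 thus ?case by simp
next
  case (Suc d)
  show ?case
  proof (intro allI impI)
    fix L1 L2 assume L: "m * Dd \<le> L1" "m * Dd \<le> L2"
    have "(P L1 * P (L2 + Suc d)) $ m = (P L1 * P (Suc (L2 + d))) $ m" by simp
    also have "\<dots> = (P (Suc L1) * P (L2 + d)) $ m" using F L by (metis le_add1 le_trans)
    also have "\<dots> = (P (Suc L1 + d) * P L2) $ m" using Suc.IH L by auto
    finally show "(P L1 * P (L2 + Suc d)) $ m = (P (L1 + Suc d) * P L2) $ m" by simp
  qed
qed

lemma moving:
  "m \<le> n \<Longrightarrow> (\<forall>L L'. m * Dd \<le> L \<longrightarrow> m * Dd \<le> L' \<longrightarrow> (P (Suc L) * P L') $ m = (P L * P (Suc L')) $ m) \<and>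
     (\<forall>L1 L2 L1' L2'. m * Dd \<le> L1 \<longrightarrow> m * Dd \<le> L2 \<longrightarrow> m * Dd \<le> L1' \<longrightarrow> m * Dd \<le> L2' \<longrightarrow>
        L1 + L2 = L1' + L2' \<longrightarrow> (P L1 * P L2) $ m = (P L1' * P L2') $ m)"
proof (induction m rule: less_induct)
  case (less m)
  have first: "\<forall>L L'. m * Dd \<le> L \<longrightarrow> m * Dd \<le> L' \<longrightarrow> (P (Suc L) * P L') $ m = (P L * P (Suc L')) $ m"
  proof (intro allI impI)
    fix L L' assume L: "m * Dd \<le> L" and L': "m * Dd \<le> L'"
    show "(P (Suc L) * P L') $ m = (P L * P (Suc L')) $ m"
    proof (cases "m = 0")
      case True thus ?thesis by (simp add: P0)
    next
      case False
      have Dd2: "2 * int n * M < int Dd" unfolding Dd_def using M1 by auto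
      have h: "Dd \<le> m * Dd" using False by simp
      hence "Dd \<le> L" "Dd \<le> L'" using L L' by linarith+
      hence L2: "2 * int n * M \<le> int L" "2 * int n * M \<le> int L'" using Dd2 by auto
      have A: "(P (Suc L) * P L') $ m = (P L * P L') $ m +
         (\<Sum>C\<in>Cl. if card C \<le> m then (P (L - dC C) * P L') $ (m - card C) else 0)"
        using step_coeff[OF less.prems L2(1)] .
      have "(P (Suc L') * P L) $ m = (P L' * P L) $ m +
         (\<Sum>C\<in>Cl. if card C \<le> m then (P (L' - dC C) * P L) $ (m - card C) else 0)"
        using step_coeff[OF less.prems L2(2)] .
      hence B: "(P L * P (Suc L')) $ m = (P L * P L') $ m +
         (\<Sum>C\<in>Cl. if card C \<le> m then (P L * P (L' - dC C)) $ (m - card C) else 0)"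
        by (simp only: mult.commute[of "P L"])
      have "(\<Sum>C\<in>Cl. if card C \<le> m then (P (L - dC C) * P L') $ (m - card C) else 0) =
            (\<Sum>C\<in>Cl. if card C \<le> m then (P L * P (L' - dC C)) $ (m - card C) else 0)"
      proof (rule sum.cong[OF refl])
        fix C assume C: "C \<in> Cl"
        show "(if card C \<le> m then (P (L - dC C) * P L') $ (m - card C) else 0) =
              (if card C \<le> m then (P L * P (L' - dC C)) $ (m - card C) else 0)"
        proof (cases "card C \<le> m")
          case True
          have c1: "1 \<le> card C" and dC: "dC C < Dd" using Cl_facts[OF C] by auto
          have lt: "m - card C < m" using c1 False by simp
          have "(m - card C + 1) * Dd \<le> m * Dd" using c1 True by (intro mult_le_mono1) simp
          hence mm: "(m - card C) * Dd + Dd \<le> m * Dd" by simp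
          have b1: "(m - card C) * Dd \<le> L - dC C" "(m - card C) * Dd \<le> L' - dC C"
            using mm L L' dC by linarith+
          have b2: "(m - card C) * Dd \<le> L" "(m - card C) * Dd \<le> L'" using mm L L' by linarith+
          have s: "L - dC C + L' = L + (L' - dC C)" using mm L L' dC by linarith
          have mn': "m - card C \<le> n" using less.prems by simp
          have IH2: "\<forall>L1 L2 L1' L2'. (m - card C) * Dd \<le> L1 \<longrightarrow> (m - card C) * Dd \<le> L2 \<longrightarrow>
             (m - card C) * Dd \<le> L1' \<longrightarrow> (m - card C) * Dd \<le> L2' \<longrightarrow>
             L1 + L2 = L1' + L2' \<longrightarrow> (P L1 * P L2) $ (m - card C) = (P L1' * P L2') $ (m - card C)"
            using less.IH[OF lt mn'] by (rule conjunct2)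
          have "(P (L - dC C) * P L') $ (m - card C) = (P L * P (L' - dC C)) $ (m - card C)"
            using IH2[rule_format, OF b1(1) b2(2) b2(1) b1(2) s] .
          thus ?thesis by simp
        qed simp
      qed
      thus ?thesis using A B by simp
    qed
  qed
  have second: "\<forall>L1 L2 L1' L2'. m * Dd \<le> L1 \<longrightarrow> m * Dd \<le> L2 \<longrightarrow> m * Dd \<le> L1' \<longrightarrow> m * Dd \<le> L2' \<longrightarrow>
        L1 + L2 = L1' + L2' \<longrightarrow> (P L1 * P L2) $ m = (P L1' * P L2') $ m"
  proof (intro allI impI)
    fix L1 L2 L1' L2' assume h: "m * Dd \<le> L1" "m * Dd \<le> L2" "m * Dd \<le> L1'" "m * Dd \<le> L2'"
      and s: "L1 + L2 = L1' + L2'"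
    show "(P L1 * P L2) $ m = (P L1' * P L2') $ m"
    proof (cases "L1 \<le> L1'")
      case True
      define d where "d = L1' - L1"
      have "L2 = L2' + d" "L1' = L1 + d" using s True unfolding d_def by auto
      thus ?thesis using shift[OF first, of d] h by auto
    next
      case False
      define d where "d = L1 - L1'"
      have "L2' = L2 + d" "L1 = L1' + d" using s False unfolding d_def by auto
      thus ?thesis using shift[OF first, of d] h by auto
    qed
  qed
  show ?case using first second by blast
qed

end


lemma inverse_nth0_one: "f $ 0 = (1::'a::field) \<Longrightarrow> inverse f $ 0 = 1"
  by (simp add: fps_inverse_def)

context setting
begin

definition L0 :: nat where "L0 = n * Dd"
definition E :: "rat fps" where "E = P (Suc L0) * inverse (P L0)"

lemma E0: "E $ 0 = 1"
  unfolding E_def by (simp add: P0 inverse_nth0_one)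

lemma intE: "intfps E"
  unfolding E_def by (intro intfps_mult intfps_inverse intP P0)

lemma PL0_inv: "P L0 * inverse (P L0) = 1"
  using inverse_mult_eq_1[of "P L0"] P0 by (simp add: mult.commute)

lemma PE: assumes L: "L0 \<le> L" shows "eqm n (P (Suc L)) (P L * E)"
proof -
  have "eqm n (P (Suc L) * P L0) (P L * P (Suc L0))"
    unfolding eqm_def
  proof (intro allI impI)
    fix m assume mn: "m \<le> n"
    have h: "m * Dd \<le> L0" unfolding L0_def using mn by (intro mult_le_mono1)
    have "\<forall>L1 L2 L1' L2'. m * Dd \<le> L1 \<longrightarrow> m * Dd \<le> L2 \<longrightarrow> m * Dd \<le> L1' \<longrightarrow> m * Dd \<le> L2' \<longrightarrow>
        L1 + L2 = L1' + L2' \<longrightarrow> (P L1 * P L2) $ m = (P L1' * P L2') $ m"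
      using moving[OF mn] by (rule conjunct2)
    moreover have "m * Dd \<le> Suc L" "m * Dd \<le> L0" "m * Dd \<le> L" "m * Dd \<le> Suc L0" using h L by auto
    ultimately show "(P (Suc L) * P L0) $ m = (P L * P (Suc L0)) $ m" by auto
  qed
  from eqm_mult_right[OF this, of "inverse (P L0)"]
  show ?thesis by (simp add: mult.assoc PL0_inv E_def)
qed

lemma PEj: assumes L: "L0 \<le> L" shows "eqm n (P (L + j)) (P L * E ^ j)"
proof (induction j)
  case 0 thus ?case by simp
next
  case (Suc j)
  have "eqm n (P (L + Suc j)) (P (L + j) * E)" using PE[of "L + j"] L by simp
  moreover have "eqm n (P (L + j) * E) (P L * E ^ j * E)" by (rule eqm_mult_right[OF Suc.IH])
  ultimately have "eqm n (P (L + Suc j)) (P L * E ^ j * E)" by (rule eqm_trans)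
  thus ?case by (simp add: ac_simps)
qed

end


context setting
begin

definition Cs :: "nat \<Rightarrow> rat fps" where
  "Cs k = Abs_fps (\<lambda>m. of_nat (cyc a k m))"

definition Kc :: nat where
  "Kc = nat (2 * (int n + 3) * M + 2) + L0 + nat (2 * int n * M + 2 * M + 1)"

definition sh :: "int set \<Rightarrow> nat" where "sh C = nat (Max C + 2 * M + 1)"

definition cw :: "int set \<Rightarrow> rat fps" where "cw C = of_nat (nat (Max C + M + 1))"

lemma Cs_nth: "Cs k $ m = of_nat (cyc a k m)" unfolding Cs_def by simp

lemma Cs_formula:
  assumes k: "Kc \<le> k"
  shows "eqm n (Cs k) (P (k - nat M - 1) + (\<Sum>C\<in>Cl. cw C * (fps_X ^ card C * P (k - sh C))))"
  unfolding eqm_def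
proof (intro allI impI)
  fix m assume mn: "m \<le> n"
  have k': "2 * (int n + 3) * M + 2 \<le> int k" using k unfolding Kc_def by auto
  have "Cs k $ m = of_nat (pc a (nat (int k - M - 1)) m) +
    (\<Sum>C\<in>Cl. of_nat (nat (Max C + M + 1) *
       (if card C \<le> m then pc a (nat (int k - Max C - 2 * M - 1)) (m - card C) else 0)))"
    unfolding Cs_nth cyc_formula[OF M1 bnd mn k'] by simp
  also have "\<dots> = (P (k - nat M - 1) + (\<Sum>C\<in>Cl. cw C * (fps_X ^ card C * P (k - sh C)))) $ m"
  proof -
    have e1: "nat (int k - M - 1) = k - nat M - 1" using M1 by auto
    have e2: "of_nat (nat (Max C + M + 1) *
       (if card C \<le> m then pc a (nat (int k - Max C - 2 * M - 1)) (m - card C) else 0)) =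
       (cw C * (fps_X ^ card C * P (k - sh C))) $ m" if C: "C \<in> Cl" for C
    proof -
      have "nat (int k - Max C - 2 * M - 1) = k - sh C" unfolding sh_def using Cl_facts(2)[OF C] M1 by auto
      thus ?thesis unfolding cw_def by (simp add: fps_mult_of_nat_nth fps_X_power_mult_nth P_nth not_less)
    qed
    show ?thesis using e1 e2 by (simp add: fps_sum_nth P_nth)
  qed
  finally show "Cs k $ m = (P (k - nat M - 1) + (\<Sum>C\<in>Cl. cw C * (fps_X ^ card C * P (k - sh C)))) $ m" .
qed

lemma Cs_step:
  assumes k: "Kc \<le> k"
  shows "eqm n (Cs (Suc k)) (Cs k * E)"
proof -
  have nM: "0 \<le> int n * M" using M1 by simp
  have "M + 1 \<le> 2 * int n * M + 2 * M + 1" using nM M1 by linarith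
  hence "nat (M + 1) \<le> nat (2 * int n * M + 2 * M + 1)" by (rule nat_mono)
  moreover have "nat (M + 1) = nat M + 1" using M1 by simp
  ultimately have hM: "nat M + 1 \<le> nat (2 * int n * M + 2 * M + 1)" by simp
  hence kM: "nat M + 1 \<le> k" using k unfolding Kc_def by linarith
  from hM have b1: "L0 \<le> k - nat M - 1" using k unfolding Kc_def by linarith
  have b2: "L0 \<le> k - sh C" if C: "C \<in> Cl" for C
  proof -
    have "sh C \<le> nat (2 * int n * M + 2 * M + 1)" unfolding sh_def using Cl_facts[OF C] M1 by auto
    thus ?thesis using k unfolding Kc_def by auto
  qed
  have e1: "Suc k - nat M - 1 = (k - nat M - 1) + 1" using kM by arith
  have e2: "Suc k - sh C = (k - sh C) + 1" if "C \<in> Cl" for C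
  proof -
    have "sh C \<le> k" using b2[OF that] k unfolding Kc_def sh_def
      using Cl_facts[OF that] M1 nM by auto
    thus ?thesis by auto
  qed
  have k1: "Kc \<le> Suc k" using k by simp
  have A: "eqm n (Cs (Suc k)) (P (Suc k - nat M - 1) + (\<Sum>C\<in>Cl. cw C * (fps_X ^ card C * P (Suc k - sh C))))"
    using Cs_formula[OF k1] .
  have B: "eqm n (P (Suc k - nat M - 1) + (\<Sum>C\<in>Cl. cw C * (fps_X ^ card C * P (Suc k - sh C))))
      ((P (k - nat M - 1) + (\<Sum>C\<in>Cl. cw C * (fps_X ^ card C * P (k - sh C)))) * E)"
  proof -
    have "eqm n (P (Suc k - nat M - 1)) (P (k - nat M - 1) * E)" using PEj[OF b1, of 1] e1 by simp
    moreover have "eqm n (\<Sum>C\<in>Cl. cw C * (fps_X ^ card C * P (Suc k - sh C)))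
         (\<Sum>C\<in>Cl. cw C * (fps_X ^ card C * (P (k - sh C) * E)))"
    proof (rule eqm_sum)
      fix C assume C: "C \<in> Cl"
      have "eqm n (P (Suc k - sh C)) (P (k - sh C) * E)" using PEj[OF b2[OF C], of 1] e2[OF C] by simp
      thus "eqm n (cw C * (fps_X ^ card C * P (Suc k - sh C))) (cw C * (fps_X ^ card C * (P (k - sh C) * E)))"
        by (intro eqm_mult_left)
    qed
    ultimately show ?thesis by (simp add: distrib_right sum_distrib_right mult.assoc eqm_add)
  qed
  have C: "eqm n ((P (k - nat M - 1) + (\<Sum>C\<in>Cl. cw C * (fps_X ^ card C * P (k - sh C)))) * E) (Cs k * E)"
    by (rule eqm_mult_right[OF eqm_sym[OF Cs_formula[OF k]]])
  show ?thesis using eqm_trans[OF eqm_trans[OF A B] C] .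
qed

end



lemma kdvd:
  assumes i: "1 \<le> i" "i \<le> n"
  shows "k dvd fact n * (k choose i)"
proof -
  have "i dvd fact n" using i by (intro dvd_fact) auto
  then obtain q where q: "fact n = i * q" by (auto elim: dvdE)
  have "i * (k choose i) = k * (k - 1 choose (i - 1))" using i by (intro times_binomial_minus1_eq) auto
  hence "fact n * (k choose i) = k * (q * (k - 1 choose (i - 1)))" unfolding q by (simp add: ac_simps)
  thus ?thesis by simp
qed

context setting
begin

definition Z :: "rat fps" where "Z = Cs Kc * inverse (E ^ Kc)"

lemma Epow0: "(E ^ j) $ 0 = 1"
  by (induction j) (simp_all add: E0)

lemma cyc0: "cyc a k 0 = 1"
proof -
  have "Cyc a k 0 = {{}}"
  proof (intro equalityI subsetI)
    fix S assume "S \<in> Cyc a k 0"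
    hence "S \<subseteq> {0..<int k}" "card S = 0" unfolding Cyc_def by auto
    thus "S \<in> {{}}" using finite_subset by fastforce
  qed (auto simp: Cyc_def afree_def per_def)
  thus ?thesis unfolding cyc_def by simp
qed

lemma Z0: "Z $ 0 = 1"
  unfolding Z_def by (simp add: Cs_nth cyc0 inverse_nth0_one Epow0)

lemma CsZ: assumes k: "Kc \<le> k" shows "eqm n (Cs k) (Z * E ^ k)"
  using k
proof (induction k rule: dec_induct)
  case base
  have "inverse (E ^ Kc) * E ^ Kc = 1" using inverse_mult_eq_1[of "E ^ Kc"] Epow0 by simp
  hence "Z * E ^ Kc = Cs Kc" unfolding Z_def by (simp add: mult.assoc)
  thus ?case by simp
next
  case (step k)
  have "eqm n (Cs (Suc k)) (Cs k * E)" using Cs_step[OF step(1)] .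
  moreover have "eqm n (Cs k * E) (Z * E ^ k * E)" using eqm_mult_right[OF step(3)] .
  ultimately have "eqm n (Cs (Suc k)) (Z * E ^ k * E)" by (rule eqm_trans)
  thus ?case by (simp add: ac_simps)
qed

lemma Epow_nth:
  assumes m1: "1 \<le> m" and mk: "m \<le> k"
  shows "(E ^ k) $ m = (\<Sum>i\<in>{1..m}. of_nat (k choose i) * ((E - 1) ^ i) $ m)"
proof -
  have "E ^ k = ((E - 1) + 1) ^ k" by simp
  also have "\<dots> = (\<Sum>i\<le>k. of_nat (k choose i) * (E - 1) ^ i * 1 ^ (k - i))" by (rule binomial_ring)
  finally have "(E ^ k) $ m = (\<Sum>i\<le>k. of_nat (k choose i) * ((E - 1) ^ i) $ m)"
    by (simp add: fps_sum_nth fps_mult_of_nat_nth)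
  also have "\<dots> = (\<Sum>i\<in>{1..m}. of_nat (k choose i) * ((E - 1) ^ i) $ m)"
  proof (rule sum.mono_neutral_right)
    show "finite {..k}" by simp
    show "{1..m} \<subseteq> {..k}" using mk by auto
    show "\<forall>i\<in>{..k} - {1..m}. of_nat (k choose i) * ((E - 1) ^ i) $ m = 0"
    proof
      fix i assume "i \<in> {..k} - {1..m}"
      hence "i = 0 \<or> m < i" by auto
      thus "of_nat (k choose i) * ((E - 1) ^ i) $ m = 0"
      proof
        assume "i = 0" thus ?thesis using m1 by simp
      next
        assume "m < i"
        have "(E - 1) $ 0 = 0" using E0 by simp
        thus ?thesis using startsby_zero_power_prefix[of "E - 1" i] \<open>m < i\<close> by simp
      qed
    qed
  qed
  finally show ?thesis .
qed

end


context setting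
begin

lemma Zm: "1 \<le> m \<Longrightarrow> m \<le> n \<Longrightarrow> Z $ m = 0"
proof (induction m rule: less_induct)
  case (less m)
  define \<epsilon> where "\<epsilon> i = ((E - 1) ^ i) $ m" for i
  have eint: "\<epsilon> i \<in> \<int>" for i
    using intfps_power[OF intfps_diff[OF intE intfps_one], of i] unfolding intfps_def \<epsilon>_def by auto
  obtain m' where m': "m = Suc m'" using less.prems by (cases m) auto
  have key: "of_nat (cyc a k m) = (\<Sum>i\<in>{1..m}. of_nat (k choose i) * \<epsilon> i) + Z $ m"
    if k: "Kc \<le> k" "m \<le> k" for k
  proof -
    have "of_nat (cyc a k m) = (Z * E ^ k) $ m" using eqm_le[OF CsZ[OF k(1)] less.prems(2)] by (simp add: Cs_nth)
    also have "\<dots> = (\<Sum>j=0..m. Z $ j * (E ^ k) $ (m - j))" by (simp add: fps_mult_nth)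
    also have "\<dots> = (\<Sum>j=0..m'. Z $ j * (E ^ k) $ (m - j)) + Z $ m" unfolding m' by (simp add: Epow0)
    also have "(\<Sum>j=0..m'. Z $ j * (E ^ k) $ (m - j)) = (E ^ k) $ m"
    proof -
      have "(\<Sum>j=0..m'. Z $ j * (E ^ k) $ (m - j)) = Z $ 0 * (E ^ k) $ m + (\<Sum>j=Suc 0..m'. Z $ j * (E ^ k) $ (m - j))"
        by (simp add: sum.atLeast_Suc_atMost)
      also have "(\<Sum>j=Suc 0..m'. Z $ j * (E ^ k) $ (m - j)) = 0"
        using less.IH less.prems m' by (intro sum.neutral) auto
      finally show ?thesis by (simp add: Z0)
    qed
    finally show ?thesis using Epow_nth[OF less.prems(1) k(2)] unfolding \<epsilon>_def by simp
  qed
  have "Z $ m \<in> \<int>"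
  proof -
    have "Z $ m = of_nat (cyc a (Kc + m) m) - (\<Sum>i\<in>{1..m}. of_nat ((Kc + m) choose i) * \<epsilon> i)"
      using key[of "Kc + m"] by simp
    thus ?thesis using eint by (auto intro!: Ints_diff Ints_sum Ints_mult)
  qed
  then obtain z where z: "Z $ m = of_int z" by (auto elim: Ints_cases)
  define e where "e i = \<lfloor>\<epsilon> i\<rfloor>" for i
  have e: "of_int (e i) = \<epsilon> i" for i
  proof -
    obtain w where "\<epsilon> i = of_int w" using eint[of i] by (auto elim: Ints_cases)
    thus ?thesis unfolding e_def by simp
  qed
  define k where "k = Kc + m + nat \<bar>int (fact n) * int m * z\<bar> + 1"
  have k: "Kc \<le> k" "m \<le> k" unfolding k_def by auto
  have "(of_int (int (cyc a k m)) :: rat) = of_int ((\<Sum>i\<in>{1..m}. int (k choose i) * e i) + z)"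
    using key[OF k] z e by simp
  hence eqi: "int (cyc a k m) = (\<Sum>i\<in>{1..m}. int (k choose i) * e i) + z" by (simp only: of_int_eq_iff)
  have kpos: "0 < k" unfolding k_def by simp
  have h: "m * cyc a k m = k * card {S \<in> Cyc a k m. 0 \<in> S}" by (rule cyc_marking[OF kpos])
  have "int m * int (cyc a k m) = int k * int (card {S \<in> Cyc a k m. 0 \<in> S})"
    using arg_cong[OF h, of int] by simp
  hence d1: "int k dvd int m * int (cyc a k m)" by simp
  have d2: "int k dvd int (fact n) * int m * (\<Sum>i\<in>{1..m}. int (k choose i) * e i)"
  proof -
    have "int (fact n) * int m * (\<Sum>i\<in>{1..m}. int (k choose i) * e i) =
          (\<Sum>i\<in>{1..m}. int (fact n * (k choose i)) * (int m * e i))"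
      by (simp add: sum_distrib_left ac_simps)
    moreover have "int k dvd (\<Sum>i\<in>{1..m}. int (fact n * (k choose i)) * (int m * e i))"
    proof (rule dvd_sum)
      fix i assume i: "i \<in> {1..m}"
      hence "k dvd fact n * (k choose i)" using less.prems by (intro kdvd) auto
      hence "int k dvd int (fact n * (k choose i))" by (simp only: of_nat_dvd_iff)
      thus "int k dvd int (fact n * (k choose i)) * (int m * e i)" by simp
    qed
    ultimately show ?thesis by simp
  qed
  have "int (fact n) * int m * int (cyc a k m) =
        int (fact n) * int m * (\<Sum>i\<in>{1..m}. int (k choose i) * e i) + int (fact n) * int m * z"
    unfolding eqi by (simp add: algebra_simps)
  moreover have "int k dvd int (fact n) * int m * int (cyc a k m)" using d1 by (simp add: mult.assoc)
  ultimately have "int k dvd int (fact n) * int m * (\<Sum>i\<in>{1..m}. int (k choose i) * e i) + int (fact n) * int m * z"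
    by simp
  hence dz: "int k dvd int (fact n) * int m * z" using dvd_add_right_iff[OF d2] by blast
  have lt: "\<bar>int (fact n) * int m * z\<bar> < int k" unfolding k_def by simp
  have "int (fact n) * int m * z = 0"
  proof (rule ccontr)
    assume "int (fact n) * int m * z \<noteq> 0"
    hence "\<bar>int k\<bar> \<le> \<bar>int (fact n) * int m * z\<bar>" using dvd_imp_le_int[OF _ dz] by blast
    thus False using lt by simp
  qed
  hence "z = 0" using less.prems by simp
  thus ?case using z by simp
qed

lemma eqmZ: "eqm n Z 1"
  unfolding eqm_def
proof (intro allI impI)
  fix i assume "i \<le> n"
  thus "Z $ i = 1 $ i" using Z0 Zm[of i] by (cases "i = 0") auto
qed

lemma CsE: assumes "Kc \<le> k" shows "eqm n (Cs k) (E ^ k)"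
proof -
  have "eqm n (Z * E ^ k) (1 * E ^ k)" by (rule eqm_mult_right[OF eqmZ])
  thus ?thesis using eqm_trans[OF CsZ[OF assms]] by simp
qed

end


definition bpoly :: "nat \<Rightarrow> rat poly" where
  "bpoly i = smult (inverse (fact i)) (\<Prod>j<i. [:- of_nat j, 1:])"

lemma poly_bpoly: "poly (bpoly i) (of_nat K) = of_nat (K choose i)"
proof -
  have "poly (bpoly i) (of_nat K) = inverse (fact i) * (\<Prod>j<i. of_nat K - of_nat j)"
    unfolding bpoly_def by (simp add: poly_prod)
  also have "(\<Prod>j<i. of_nat K - of_nat j) = (\<Prod>j = 0..<i. (of_nat K :: rat) - of_nat j)"
    by (simp add: atLeast0LessThan)
  also have "\<dots> = fact i * (of_nat K gchoose i)" by (rule gbinomial_mult_fact[symmetric])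
  finally show ?thesis by (simp add: binomial_gbinomial)
qed

context setting
begin

definition U :: "nat \<Rightarrow> (nat \<Rightarrow> nat) \<Rightarrow> rat fps" where
  "U s k = Abs_fps (\<lambda>j. of_nat (num_indep a j s k))"

lemma U0: "U 0 k = 1"
  unfolding U_def by (rule fps_ext) (simp add: num_indep_0)

lemma U_Suc: assumes "M < int (k s)" shows "U (Suc s) k = U s k * Cs (k s)"
proof (rule fps_ext)
  fix j
  have "U (Suc s) k $ j = of_nat (\<Sum>i\<le>j. num_indep a i s k * cyc a (k s) (j - i))"
    unfolding U_def using num_indep_Suc[where k=k and s=s and n=j, OF pos bnd assms] by simp
  also have "\<dots> = (U s k * Cs (k s)) $ j"
    by (simp add: fps_mult_nth U_def Cs_nth atLeast0AtMost)
  finally show "U (Suc s) k $ j = (U s k * Cs (k s)) $ j" .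
qed

lemma Kc_big: "M < int Kc"
proof -
  have "0 \<le> int n * M" using M1 by simp
  moreover have "2 * (int n + 3) * M = 2 * (int n * M) + 6 * M" by (simp add: algebra_simps)
  ultimately have "M < 2 * (int n + 3) * M + 2" using M1 by linarith
  thus ?thesis unfolding Kc_def by linarith
qed

lemma UE: "(\<forall>t<s. Kc \<le> k t) \<Longrightarrow> eqm n (U s k) (E ^ (\<Sum>t<s. k t))"
proof (induction s)
  case 0 thus ?case by (simp add: U0)
next
  case (Suc s)
  have ks: "Kc \<le> k s" using Suc.prems by auto
  hence "M < int (k s)" using Kc_big by linarith
  hence "U (Suc s) k = U s k * Cs (k s)" by (rule U_Suc)
  moreover have "eqm n (U s k * Cs (k s)) (E ^ (\<Sum>t<s. k t) * E ^ k s)"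
    using Suc by (intro eqm_mult CsE ks) auto
  ultimately show ?case by (simp add: power_add)
qed

lemma main:
  "\<exists>p :: rat poly. \<forall>s k. (\<forall>t<s. Kc \<le> k t) \<longrightarrow>
     of_nat (num_indep a n s k) = poly p (of_nat (\<Sum>t<s. k t))"
proof -
  define \<epsilon> where "\<epsilon> i = ((E - 1) ^ i) $ n" for i
  define p where "p = (\<Sum>i\<le>n. smult (\<epsilon> i) (bpoly i))"
  have "of_nat (num_indep a n s k) = poly p (of_nat (\<Sum>t<s. k t))" if h: "\<forall>t<s. Kc \<le> k t" for s k
  proof -
    define K where "K = (\<Sum>t<s. k t)"
    have "of_nat (num_indep a n s k) = (E ^ K) $ n"
      using eqm_le[OF UE[OF h], of n] unfolding K_def U_def by simp
    also have "E ^ K = ((E - 1) + 1) ^ K" by simp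
    also have "\<dots> = (\<Sum>i\<le>K. of_nat (K choose i) * (E - 1) ^ i * 1 ^ (K - i))" by (rule binomial_ring)
    finally have "of_nat (num_indep a n s k) = (\<Sum>i\<le>K. of_nat (K choose i) * \<epsilon> i)"
      by (simp add: fps_sum_nth fps_mult_of_nat_nth \<epsilon>_def)
    also have "\<dots> = (\<Sum>i\<le>K + n. of_nat (K choose i) * \<epsilon> i)"
      by (rule sum.mono_neutral_left) auto
    also have "\<dots> = (\<Sum>i\<le>n. of_nat (K choose i) * \<epsilon> i)"
    proof (rule sum.mono_neutral_right)
      show "finite {..K + n}" by simp
      show "{..n} \<subseteq> {..K + n}" by auto
      show "\<forall>i\<in>{..K + n} - {..n}. of_nat (K choose i) * \<epsilon> i = 0"
      proof
        fix i assume "i \<in> {..K + n} - {..n}"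
        hence "n < i" by auto
        have "(E - 1) $ 0 = 0" using E0 by simp
        thus "of_nat (K choose i) * \<epsilon> i = 0"
          using startsby_zero_power_prefix[of "E - 1" i] \<open>n < i\<close> unfolding \<epsilon>_def by simp
      qed
    qed
    also have "\<dots> = poly p (of_nat K)" unfolding p_def by (simp add: poly_sum poly_bpoly mult.commute)
    finally show ?thesis unfolding K_def .
  qed
  thus ?thesis by blast
qed

end

theorem theorem3p4:
  fixes a :: "nat set" and n :: nat
  assumes "finite a" and "\<forall>r\<in>a. r > 0"
  shows "\<exists>p :: rat poly. \<exists>N :: nat. \<forall>s \<ge> 1. \<forall>k :: nat \<Rightarrow> nat.
           (\<forall>t<s. k t \<ge> N \<and> k t \<ge> 1) \<longrightarrow>
           of_nat (num_indep a n s k) = poly p (of_nat (\<Sum>t<s. k t))"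
proof -
  define M :: int where "M = int (Max (insert 1 a))"
  have fin: "finite (insert 1 a)" using assms(1) by simp
  have M1: "1 \<le> M" unfolding M_def using Max_ge[OF fin, of 1] by simp
  have bnd: "\<forall>r\<in>a. int r \<le> M"
  proof
    fix r assume "r \<in> a"
    hence "r \<le> Max (insert 1 a)" using Max_ge[OF fin, of r] by simp
    thus "int r \<le> M" unfolding M_def by simp
  qed
  have st: "setting a M" using M1 bnd assms(2) unfolding setting_def by blast
  have "\<exists>p :: rat poly. \<forall>s k. (\<forall>t<s. setting.Kc M n \<le> k t) \<longrightarrow>
     of_nat (num_indep a n s k) = poly p (of_nat (\<Sum>t<s. k t))"
    by (rule setting.main[OF st])
  then obtain p :: "rat poly" where p: "\<forall>s k. (\<forall>t<s. setting.Kc M n \<le> k t) \<longrightarrow>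
     of_nat (num_indep a n s k) = poly p (of_nat (\<Sum>t<s. k t))" ..
  show ?thesis
  proof (intro exI[of _ p] exI[of _ "setting.Kc M n"] allI impI)
    fix s :: nat and k :: "nat \<Rightarrow> nat" assume "1 \<le> s" and h: "\<forall>t<s. setting.Kc M n \<le> k t \<and> 1 \<le> k t"
    hence "\<forall>t<s. setting.Kc M n \<le> k t" by simp
    moreover have "(\<forall>t<s. setting.Kc M n \<le> k t) \<longrightarrow>
       of_nat (num_indep a n s k) = poly p (of_nat (\<Sum>t<s. k t))" using spec[OF spec[OF p, of s], of k] .
    ultimately show "of_nat (num_indep a n s k) = poly p (of_nat (\<Sum>t<s. k t))" by (rule rev_mp)
  qed
qed

end
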